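(* Let $x\in\mathscr{S}\cdot\mathcal{Y}$ with coefficient matrix $\mathbf{X}$ and let $\varrho=x-\mathcal{P}x$, where $\mathcal{P}$ is one of the two projections $\mathcal{P}_{\hat{\mathcal{Y}}\to\hat{\mathscr{S}}}$, $\mathcal{P}_{\hat{\mathscr{S}}\to\hat{\mathcal{Y}}}$ defined in the context (with reduced dimensions $1\le\hat q\le q$ and $2\le\hat s\le s$). Then $$\|\varrho\|_{\mathcal{S}\cdot\mathcal{Y}}\le\begin{cases}\Sigma_{\hat{\mathcal{Y}}\to\hat{\mathcal{S}}}&\text{if }\mathcal{P}=\mathcal{P}_{\hat{\mathcal{Y}}\to\hat{\mathscr{S}}},\\ \Sigma_{\hat{\mathcal{S}}\to\hat{\mathcal{Y}}}&\text{if }\mathcal{P}=\mathcal{P}_{\hat{\mathscr{S}}\to\hat{\mathcal{Y}}},\end{cases}$$ where $$\Sigma_{\hat{\mathcal{Y}}\to\hat{\mathcal{S}}}=\Big(\sum_{i=\hat q+1}^q\sigma_i^2\Big)^{1/2}+\Big(\sum_{j=\hat s}^s\mathring\sigma_j^2\Big)^{1/2},\qquad \Sigma_{\hat{\mathcal{S}}\to\hat{\mathcal{Y}}}=\Big(\sum_{j=\hat s}^s\underline{\mathring\sigma}_j^2\Big)^{1/2}+\Big(\sum_{i=\hat q+1}^q\underline\sigma_i^2\Big)^{1/2},$$ with $\sigma_i$ the singular values of $\mathbf{L}_{\mathcal{Y}}^T\mathbf{X}\mathbf{L}_{\mathcal{S}}$, $\mathring\sigma_j$ those of $\mathbf{L}_{\mathcal{Y}}^T\mathring{\mathbf{X}}_{\mathscr{S}\cdot\hat{\mathcal{Y}}}\mathbf{L}_{\mathcal{S}}$,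 $\underline{\mathring\sigma}_j$ those of $\mathbf{L}_{\mathcal{Y}}^T\mathring{\mathbf{X}}\mathbf{L}_{\mathcal{S}}$, and $\underline\sigma_i$ those of $\mathbf{L}_{\mathcal{Y}}^T\mathbf{X}_{\hat{\mathscr{S}}\cdot\mathcal{Y}}\mathbf{L}_{\mathcal{S}}$.
   Context: Setting: $T>0$, $\Omega\subset\mathbb{R}^d$ bounded domain, $\mathcal{S}=\mathrm{span}\{\psi_1,\ldots,\psi_s\}\subset L^2(0,T)$ a nodal basis with $\psi_1$ the nodal function at $t=0$ ($\psi_1(0)=1$, $\psi_j(0)=0$ for $j\ge2$), $\mathcal{Y}=\mathrm{span}\{\nu_1,\ldots,\nu_q\}\subset L^2(\Omega)$. $\mathcal{S}\cdot\mathcal{Y}$ is the span of $\psi_j\nu_i$; $x=\sum_{i,j}\mathbf{x}_{i,j}\nu_i\psi_j$ has coefficient matrix $[\mathbf{x}_{i,j}]\in\mathbb{R}^{q\times s}$; all coefficient matrices below are taken with respect to this full basis. Inner product $(x_1,x_2)_{\mathcal{S}\cdot\mathcal{Y}}=\int_0^T\int_\Omega x_1x_2$ and induced norm; for a subspace $\mathcal{Z}\subseteq\mathcal{S}\cdot\mathcal{Y}$, $\Pi_{\mathcal{Z}}$ is the orthogonal projection onto $\mathcal{Z}$ in this inner product. Gramians $\mathbf{M}_{\mathcal{S}}=[(\psi_i,\psi_j)_{L^2(0,T)}]=\mathbf{L}_{\mathcal{S}}\mathbf{L}_{\mathcal{S}}^T$ with $\mathbf{L}_{\mathcal{S}}$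 invertible upper triangular, $\mathbf{M}_{\mathcal{Y}}=[(\nu_i,\nu_j)_{L^2(\Omega)}]=\mathbf{L}_{\mathcal{Y}}\mathbf{L}_{\mathcal{Y}}^T$. $\Pi_{\mathcal{Y}}$ is the $L^2(\Omega)$-projection onto $\mathcal{Y}$, $x_0$ a given initial value, and $\mathscr{S}\cdot\mathcal{Y}=\{x\in\mathcal{S}\cdot\mathcal{Y}:x(0)=\Pi_{\mathcal{Y}}x_0\}$. For a matrix $\mathbf{Z}$, $\mathring{\mathbf{Z}}$ denotes $\mathbf{Z}$ with first column set to zero. Reduced space basis from $\mathbf{Z}\in\mathbb{R}^{q\times s}$: $V_{\hat q}$ = matrix of the $\hat q$ leading left singular vectors of $\mathbf{L}_{\mathcal{Y}}^T\mathbf{Z}\mathbf{L}_{\mathcal{S}}$, $[\hat\nu_1,\ldots,\hat\nu_{\hat q}]^T=V_{\hat q}^T\mathbf{L}_{\mathcal{Y}}^{-1}[\nu_1,\ldots,\nu_q]^T$, $\hat{\mathcal{Y}}=\mathrm{span}\{\hat\nu_i\}$. Reduced time basis (incorporating the initial condition) from $\mathbf{Z}$: $\mathring U_{\hat s-1}$ = the $\hat s-1$ leading right singular vectors of $\mathbf{L}_{\mathcal{Y}}^T\mathring{\mathbf{Z}}\mathbf{L}_{\mathcal{S}}$, $U_{\hat s}=[(\mathbf{L}_{\mathcal{S}}^T)_{:,1}\;\mathring U_{\hat s-1}]$ (first column of $\mathbf{L}_{\mathcal{S}}^T$ prepended), $[\hat\psi_1,\ldots,\hat\psi_{\hat s}]^T=U_{\hat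 s}^T\mathbf{L}_{\mathcal{S}}^{-1}[\psi_1,\ldots,\psi_s]^T$, $\hat{\mathcal{S}}=\mathrm{span}\{\hat\psi_j\}$; the symbol $\hat{\mathscr{S}}$ indicates this construction and that functions satisfy the initial condition $\cdot(0)=\Pi_{\mathcal{Y}}x_0$. Products $\mathcal{S}\cdot\hat{\mathcal{Y}}$, $\hat{\mathcal{S}}\cdot\mathcal{Y}$, $\hat{\mathcal{S}}\cdot\hat{\mathcal{Y}}$ are spans of the corresponding products of basis functions. Projection $\mathcal{P}_{\hat{\mathcal{Y}}\to\hat{\mathscr{S}}}$: build $\hat{\mathcal{Y}}$ from $\mathbf{X}$; let $\mathbf{X}_{\mathscr{S}\cdot\hat{\mathcal{Y}}}$ be the coefficient matrix of $\Pi_{\mathcal{S}\cdot\hat{\mathcal{Y}}}x$; build $\hat{\mathcal{S}}$ from $\mathbf{X}_{\mathscr{S}\cdot\hat{\mathcal{Y}}}$; set $\mathcal{P}_{\hat{\mathcal{Y}}\to\hat{\mathscr{S}}}x=\Pi_{\hat{\mathcal{S}}\cdot\hat{\mathcal{Y}}}\Pi_{\mathcal{S}\cdot\hat{\mathcal{Y}}}x$. Projection $\mathcal{P}_{\hat{\mathscr{S}}\to\hat{\mathcal{Y}}}$: build $\hat{\mathcal{S}}$ from $\mathbf{X}$; let $\mathbf{X}_{\hat{\mathscr{S}}\cdot\mathcal{Y}}$ be the coefficient matrix of $\Pi_{\hat{\mathcal{S}}\cdot\mathcal{Y}}x$; build $\hat{\mathcal{Y}}$ from $\mathbf{X}_{\hat{\mathscr{S}}\cdot\mathcal{Y}}$;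 set $\mathcal{P}_{\hat{\mathscr{S}}\to\hat{\mathcal{Y}}}x=\Pi_{\hat{\mathcal{S}}\cdot\hat{\mathcal{Y}}}\Pi_{\hat{\mathcal{S}}\cdot\mathcal{Y}}x$. Singular values are ordered nonincreasingly and taken to be $0$ for indices exceeding $\min(q,s)$. *)

theory Defs
  imports "HOL-Analysis.Analysis" "Jordan_Normal_Form.Matrix"
begin

text \<open>Conventions: all indices are 0-based. The paper's basis functions
psi_1..psi_s and nu_1..nu_q are psi 0 .. psi (s-1) and nu 0 .. nu (q-1);
matrices are Jordan_Normal_Form matrices (real mat).\<close>

definition ip_T :: "real \<Rightarrow> (real \<Rightarrow> real) \<Rightarrow> (real \<Rightarrow> real) \<Rightarrow> real" where
  "ip_T T f g = (LINT t:{0..T}|lborel. f t * g t)"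

definition ip_Om :: "'d::euclidean_space set \<Rightarrow> ('d \<Rightarrow> real) \<Rightarrow> ('d \<Rightarrow> real) \<Rightarrow> real" where
  "ip_Om \<Omega> f g = (LINT \<xi>:\<Omega>|lborel. f \<xi> * g \<xi>)"

definition ip_SY :: "real \<Rightarrow> 'd::euclidean_space set \<Rightarrow> (real \<Rightarrow> 'd \<Rightarrow> real) \<Rightarrow> (real \<Rightarrow> 'd \<Rightarrow> real) \<Rightarrow> real" where
  "ip_SY T \<Omega> x1 x2 = (LINT t:{0..T}|lborel. (LINT \<xi>:\<Omega>|lborel. x1 t \<xi> * x2 t \<xi>))"

definition norm_SY :: "real \<Rightarrow> 'd::euclidean_space set \<Rightarrow> (real \<Rightarrow> 'd \<Rightarrow> real) \<Rightarrow> real" where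
  "norm_SY T \<Omega> x = sqrt (ip_SY T \<Omega> x x)"

definition orth_proj :: "('a::minus \<Rightarrow> 'a \<Rightarrow> real) \<Rightarrow> 'a set \<Rightarrow> 'a \<Rightarrow> 'a" where
  "orth_proj ip Z x = (THE p. p \<in> Z \<and> (\<forall>z\<in>Z. ip (x - p) z = 0))"

definition gram_T :: "real \<Rightarrow> nat \<Rightarrow> (nat \<Rightarrow> real \<Rightarrow> real) \<Rightarrow> real mat" where
  "gram_T T s \<psi> = mat s s (\<lambda>(i,j). ip_T T (\<psi> i) (\<psi> j))"

definition gram_Om :: "'d::euclidean_space set \<Rightarrow> nat \<Rightarrow> (nat \<Rightarrow> 'd \<Rightarrow> real) \<Rightarrow> real mat" where
  "gram_Om \<Omega> q \<nu> = mat q q (\<lambda>(i,j). ip_Om \<Omega> (\<nu> i) (\<nu> j))"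

definition fspan :: "nat \<Rightarrow> (nat \<Rightarrow> 'd \<Rightarrow> real) \<Rightarrow> ('d \<Rightarrow> real) set" where
  "fspan q \<nu> = {(\<lambda>\<xi>. \<Sum>i<q. c i * \<nu> i \<xi>) | c. True}"

definition prod_span :: "nat \<Rightarrow> (nat \<Rightarrow> 'd \<Rightarrow> real) \<Rightarrow> nat \<Rightarrow> (nat \<Rightarrow> real \<Rightarrow> real)
    \<Rightarrow> (real \<Rightarrow> 'd \<Rightarrow> real) set" where
  "prod_span q \<nu> s \<psi> = {(\<lambda>t \<xi>. \<Sum>i<q. \<Sum>j<s. C i j * \<nu> i \<xi> * \<psi> j t) | C. True}"

definition mat_to_fun :: "(nat \<Rightarrow> 'd \<Rightarrow> real) \<Rightarrow> (nat \<Rightarrow> real \<Rightarrow> real) \<Rightarrow> real mat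
    \<Rightarrow> (real \<Rightarrow> 'd \<Rightarrow> real)" where
  "mat_to_fun \<nu> \<psi> X = (\<lambda>t \<xi>. \<Sum>i<dim_row X. \<Sum>j<dim_col X. X $$ (i,j) * \<nu> i \<xi> * \<psi> j t)"

definition coeff_mat :: "nat \<Rightarrow> nat \<Rightarrow> (nat \<Rightarrow> 'd \<Rightarrow> real) \<Rightarrow> (nat \<Rightarrow> real \<Rightarrow> real)
    \<Rightarrow> (real \<Rightarrow> 'd \<Rightarrow> real) \<Rightarrow> real mat" where
  "coeff_mat q s \<nu> \<psi> x = (THE X. X \<in> carrier_mat q s \<and> x = mat_to_fun \<nu> \<psi> X)"

definition minv :: "real mat \<Rightarrow> real mat" where
  "minv L = (SOME M. M \<in> carrier_mat (dim_row L) (dim_row L) \<and>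
      L * M = 1\<^sub>m (dim_row L) \<and> M * L = 1\<^sub>m (dim_row L))"

definition zero_first_col :: "real mat \<Rightarrow> real mat" where
  "zero_first_col Z = mat (dim_row Z) (dim_col Z) (\<lambda>(i,j). if j = 0 then 0 else Z $$ (i,j))"

definition is_svd :: "real mat \<Rightarrow> real mat \<Rightarrow> real mat \<Rightarrow> real mat \<Rightarrow> bool" where
  "is_svd A U D V \<longleftrightarrow>
     U \<in> carrier_mat (dim_row A) (dim_row A) \<and> V \<in> carrier_mat (dim_col A) (dim_col A) \<and>
     D \<in> carrier_mat (dim_row A) (dim_col A) \<and>
     transpose_mat U * U = 1\<^sub>m (dim_row A) \<and> transpose_mat V * V = 1\<^sub>m (dim_col A) \<and>
     (\<forall>i<dim_row A. \<forall>j<dim_col A. i \<noteq> j \<longrightarrow> D $$ (i,j) = 0) \<and>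
     (\<forall>i<min (dim_row A) (dim_col A). 0 \<le> D $$ (i,i)) \<and>
     (\<forall>i j. i \<le> j \<longrightarrow> j < min (dim_row A) (dim_col A) \<longrightarrow> D $$ (j,j) \<le> D $$ (i,i)) \<and>
     A = U * D * transpose_mat V"

definition sing_val :: "real mat \<Rightarrow> nat \<Rightarrow> real" where
  "sing_val D i = (if i < min (dim_row D) (dim_col D) then D $$ (i,i) else 0)"

text \<open>Reduced space basis: U = left singular vectors (of L_Y^T Z L_S);
V_qh = first qh columns of U; nuhat = V_qh^T L_Y^-1 nu.\<close>
definition red_space_basis :: "real mat \<Rightarrow> nat \<Rightarrow> (nat \<Rightarrow> 'd \<Rightarrow> real) \<Rightarrow> nat \<Rightarrow> real mat
    \<Rightarrow> nat \<Rightarrow> 'd \<Rightarrow> real" where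
  "red_space_basis LY q \<nu> qh U =
     (let Vq = mat q qh (\<lambda>(i,k). U $$ (i,k));
          W = transpose_mat Vq * minv LY
      in (\<lambda>k \<xi>. \<Sum>i<q. W $$ (k,i) * \<nu> i \<xi>))"

text \<open>Reduced time basis: V = right singular vectors (of L_Y^T Zring L_S);
U_sh = [first column of L_S^T, first sh-1 columns of V]; psihat = U_sh^T L_S^-1 psi.\<close>
definition red_time_basis :: "real mat \<Rightarrow> nat \<Rightarrow> (nat \<Rightarrow> real \<Rightarrow> real) \<Rightarrow> nat \<Rightarrow> real mat
    \<Rightarrow> nat \<Rightarrow> real \<Rightarrow> real" where
  "red_time_basis LS s \<psi> sh V =
     (let Ush = mat s sh (\<lambda>(j,k). if k = 0 then transpose_mat LS $$ (j,0) else V $$ (j,k-1));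
          W = transpose_mat Ush * minv LS
      in (\<lambda>k t. \<Sum>j<s. W $$ (k,j) * \<psi> j t))"

end

theory Submission
  imports Defs "Jordan_Normal_Form.Determinant"
begin

definition fip :: "nat \<Rightarrow> nat \<Rightarrow> (nat \<Rightarrow> nat \<Rightarrow> real) \<Rightarrow> (nat \<Rightarrow> nat \<Rightarrow> real) \<Rightarrow> real" where
  "fip q s f g = (\<Sum>a<q. \<Sum>b<s. f a b * g a b)"

lemma fip_comm: "fip q s f g = fip q s g f"
  unfolding fip_def by (simp add: mult.commute)

lemma fip_add2: "fip q s f (\<lambda>a b. g a b + h a b) = fip q s f g + fip q s f h"
  unfolding fip_def by (simp add: distrib_left sum.distrib)

lemma fip_add1: "fip q s (\<lambda>a b. g a b + h a b) f = fip q s g f + fip q s h f"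
  unfolding fip_def by (simp add: distrib_right sum.distrib)

lemma fip_diff2: "fip q s f (\<lambda>a b. g a b - h a b) = fip q s f g - fip q s f h"
  unfolding fip_def by (simp add: right_diff_distrib sum_subtractf)

lemma fip_diff1: "fip q s (\<lambda>a b. g a b - h a b) f = fip q s g f - fip q s h f"
  unfolding fip_def by (simp add: left_diff_distrib sum_subtractf)

lemma fip_scale2: "fip q s f (\<lambda>a b. c * g a b) = c * fip q s f g"
  unfolding fip_def by (simp add: sum_distrib_left algebra_simps)

lemma fip_scale1: "fip q s (\<lambda>a b. c * g a b) f = c * fip q s g f"
  unfolding fip_def by (simp add: sum_distrib_left algebra_simps)

lemma sum3_swap: "(\<Sum>a\<in>A. \<Sum>b\<in>B. \<Sum>e\<in>F. g a b e) = (\<Sum>e\<in>F. \<Sum>a\<in>A. \<Sum>b\<in>B. g a b e)"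
proof -
  have "(\<Sum>a\<in>A. \<Sum>b\<in>B. \<Sum>e\<in>F. g a b e) = (\<Sum>a\<in>A. \<Sum>e\<in>F. \<Sum>b\<in>B. g a b e)"
    by (rule sum.cong[OF refl], rule sum.swap)
  also have "\<dots> = (\<Sum>e\<in>F. \<Sum>a\<in>A. \<Sum>b\<in>B. g a b e)" by (rule sum.swap)
  finally show ?thesis .
qed

lemma fip_sum2: "fip q s f (\<lambda>a b. \<Sum>e\<in>F. d e * H e a b) = (\<Sum>e\<in>F. d e * fip q s f (H e))"
  unfolding fip_def sum_distrib_left by (subst sum3_swap) (simp add: algebra_simps)

lemma fip_cong: "(\<And>a b. a < q \<Longrightarrow> b < s \<Longrightarrow> f a b = f' a b) \<Longrightarrow>
   (\<And>a b. a < q \<Longrightarrow> b < s \<Longrightarrow> g a b = g' a b) \<Longrightarrow> fip q s f g = fip q s f' g'"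
  unfolding fip_def by (intro sum.cong) auto

lemma fip_self_nonneg: "fip q s f f \<ge> 0"
  unfolding fip_def by (intro sum_nonneg) auto

lemma fip_self_zero: "fip q s f f = 0 \<Longrightarrow> a < q \<Longrightarrow> b < s \<Longrightarrow> f a b = 0"
proof -
  assume z: "fip q s f f = 0" and ab: "a < q" "b < s"
  have "\<forall>a\<in>{..<q}. (\<Sum>b<s. f a b * f a b) = 0"
    using z unfolding fip_def by (subst sum_nonneg_eq_0_iff[symmetric]) (auto intro: sum_nonneg)
  hence "(\<Sum>b<s. f a b * f a b) = 0" using ab by auto
  hence "\<forall>b\<in>{..<s}. f a b * f a b = 0"
    by (subst sum_nonneg_eq_0_iff[symmetric]) auto
  thus ?thesis using ab by auto
qed

lemma gs_exists:
  assumes "finite F"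
  shows "\<forall>B. \<exists>c. \<forall>e\<in>F. fip q s (\<lambda>a b. B a b - (\<Sum>e'\<in>F. c e' * H e' a b)) (H e) = 0"
  using assms
proof (induction F rule: finite_induct)
  case empty
  then show ?case by simp
next
  case (insert e F)
  show ?case
  proof
    fix B
    define mc where "mc c = (\<lambda>a b. \<Sum>e'\<in>F. c e' * H e' a b)" for c
    obtain cB where cB: "\<forall>e'\<in>F. fip q s (\<lambda>a b. B a b - mc cB a b) (H e') = 0"
      using insert.IH[THEN spec, of B] unfolding mc_def by auto
    obtain ch where ch0: "\<forall>e'\<in>F. fip q s (\<lambda>a b. H e a b - mc ch a b) (H e') = 0"
      using insert.IH[THEN spec, of "H e"] unfolding mc_def by auto
    define r where "r = (\<lambda>a b. H e a b - mc ch a b)"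
    have ch: "\<forall>e'\<in>F. fip q s r (H e') = 0" using ch0 unfolding r_def .
    have orthF: "fip q s f (mc d) = 0" if "\<forall>e'\<in>F. fip q s f (H e') = 0" for f d
      using that unfolding mc_def fip_sum2 by simp
    have rB: "fip q s (\<lambda>a b. B a b - mc cB a b) (mc d) = 0" for d by (rule orthF[OF cB])
    have rr: "fip q s r (mc d) = 0" for d by (rule orthF[OF ch])
    have He: "H e = (\<lambda>a b. mc ch a b + r a b)" unfolding r_def by simp
    show "\<exists>c. \<forall>e'\<in>insert e F. fip q s (\<lambda>a b. B a b - (\<Sum>e''\<in>insert e F. c e'' * H e'' a b)) (H e') = 0"
    proof (cases "fip q s r r = 0")
      case True
      have r0: "a < q \<Longrightarrow> b < s \<Longrightarrow> r a b = 0" for a b using fip_self_zero[OF True] .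
      define c' where "c' = cB(e := 0)"
      have mc': "(\<Sum>e''\<in>insert e F. c' e'' * H e'' a b) = mc cB a b" for a b
        using insert.hyps unfolding c'_def mc_def by (auto intro: sum.cong)
      have "fip q s (\<lambda>a b. B a b - mc cB a b) (H e) = 0"
      proof -
        have "fip q s (\<lambda>a b. B a b - mc cB a b) (H e) = fip q s (\<lambda>a b. B a b - mc cB a b) (mc ch)
           + fip q s (\<lambda>a b. B a b - mc cB a b) r"
          by (subst He) (rule fip_add2)
        also have "fip q s (\<lambda>a b. B a b - mc cB a b) r = fip q s (\<lambda>a b. B a b - mc cB a b) (\<lambda>a b. 0)"
          by (rule fip_cong) (auto simp: r0)
        finally show ?thesis using rB by (simp add: fip_def)
      qed
      then show ?thesis using cB by (intro exI[of _ c']) (auto simp: mc')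
    next
      case False
      define \<gamma> where "\<gamma> = fip q s (\<lambda>a b. B a b - mc cB a b) r / fip q s r r"
      define c' where "c' = (\<lambda>e'. cB e' - \<gamma> * ch e')(e := \<gamma>)"
      have mc': "(\<Sum>e''\<in>insert e F. c' e'' * H e'' a b) = mc cB a b + \<gamma> * r a b" for a b
      proof -
        have "(\<Sum>e''\<in>insert e F. c' e'' * H e'' a b) = \<gamma> * H e a b + (\<Sum>e''\<in>F. (cB e'' - \<gamma> * ch e'') * H e'' a b)"
        proof -
          have "(\<Sum>e''\<in>F. c' e'' * H e'' a b) = (\<Sum>e''\<in>F. (cB e'' - \<gamma> * ch e'') * H e'' a b)"
            using insert.hyps(2) unfolding c'_def by (intro sum.cong) auto
          then show ?thesis using insert.hyps by (simp add: c'_def)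
        qed
        also have "\<dots> = mc cB a b + \<gamma> * r a b"
          unfolding r_def mc_def by (simp add: algebra_simps sum_subtractf sum_distrib_left)
        finally show ?thesis .
      qed
      define R where "R = (\<lambda>a b. B a b - mc cB a b)"
      have res: "(\<lambda>a b. B a b - (\<Sum>e''\<in>insert e F. c' e'' * H e'' a b)) = (\<lambda>a b. R a b - \<gamma> * r a b)"
        unfolding mc' R_def by (simp add: fun_eq_iff)
      have rH: "fip q s r (H e') = 0" if "e' \<in> F" for e' using ch that by auto
      have "fip q s (\<lambda>a b. R a b - \<gamma> * r a b) (H e') = 0" if "e' \<in> insert e F" for e'
      proof (cases "e' = e")
        case True
        have "fip q s (\<lambda>a b. R a b - \<gamma> * r a b) (H e) =
          (fip q s R (mc ch) - \<gamma> * fip q s r (mc ch)) + (fip q s R r - \<gamma> * fip q s r r)"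
          by (simp add: He fip_add2 fip_diff1 fip_scale1)
        also have "\<dots> = 0" using rB[of ch] rr[of ch] False unfolding R_def \<gamma>_def by simp
        finally show ?thesis using True by (simp only:)
      next
        case False
        then have "e' \<in> F" using that by simp
        then show ?thesis using cB rH unfolding R_def by (simp add: fip_diff1 fip_scale1)
      qed
      then have "\<forall>e'\<in>insert e F. fip q s (\<lambda>a b. B a b - (\<Sum>e''\<in>insert e F. c' e'' * H e'' a b)) (H e') = 0"
        unfolding res by blast
      then show ?thesis by (rule exI[of _ c'])
    qed
  qed
qed

lemma mult_entry: "A \<in> carrier_mat r n \<Longrightarrow> B \<in> carrier_mat n c \<Longrightarrow> i < r \<Longrightarrow> j < c \<Longrightarrow>
  (A * B) $$ (i,j) = (\<Sum>k<n. A $$ (i,k) * B $$ (k,j))"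
  by (auto simp: scalar_prod_def lessThan_atLeast0 intro!: sum.cong)

lemma mult3_entry: "A \<in> carrier_mat r n \<Longrightarrow> C \<in> carrier_mat n m \<Longrightarrow> B \<in> carrier_mat m c \<Longrightarrow> i < r \<Longrightarrow> j < c \<Longrightarrow>
  (A * C * B) $$ (i,j) = (\<Sum>k<n. \<Sum>l<m. A $$ (i,k) * C $$ (k,l) * B $$ (l,j))"
proof -
  assume A: "A \<in> carrier_mat r n" and C: "C \<in> carrier_mat n m" and B: "B \<in> carrier_mat m c" and ij: "i < r" "j < c"
  have "(A * C * B) $$ (i,j) = (\<Sum>l<m. (A * C) $$ (i,l) * B $$ (l,j))"
    using A C B ij by (intro mult_entry) auto
  also have "\<dots> = (\<Sum>l<m. (\<Sum>k<n. A $$ (i,k) * C $$ (k,l)) * B $$ (l,j))"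
    using A C ij by (intro sum.cong refl) (subst mult_entry[OF A C], auto)
  also have "\<dots> = (\<Sum>l<m. \<Sum>k<n. A $$ (i,k) * C $$ (k,l) * B $$ (l,j))"
    by (simp add: sum_distrib_right)
  also have "\<dots> = (\<Sum>k<n. \<Sum>l<m. A $$ (i,k) * C $$ (k,l) * B $$ (l,j))"
    by (rule sum.swap)
  finally show ?thesis .
qed

lemma proj_mat:
  assumes P1: "P1 \<in> carrier_mat q n" and P2: "P2 \<in> carrier_mat m s"
  shows "\<exists>C0 \<in> carrier_mat n m. \<forall>C \<in> carrier_mat n m.
     fip q s (\<lambda>a b. B a b - (P1 * C0 * P2) $$ (a,b)) (\<lambda>a b. (P1 * C * P2) $$ (a,b)) = 0"
proof -
  define H where "H = (\<lambda>(k::nat,l::nat) a b. P1 $$ (a,k) * P2 $$ (l,b))"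
  define F where "F = {..<n} \<times> {..<m}"
  have ent: "(P1 * C * P2) $$ (a,b) = (\<Sum>e\<in>F. C $$ e * H e a b)"
    if "C \<in> carrier_mat n m" "a < q" "b < s" for C :: "real mat" and a b
  proof -
    have "(P1 * C * P2) $$ (a,b) = (\<Sum>k<n. \<Sum>l<m. P1 $$ (a,k) * C $$ (k,l) * P2 $$ (l,b))"
      using that P1 P2 by (intro mult3_entry) auto
    also have "\<dots> = (\<Sum>(k,l)\<in>F. P1 $$ (a,k) * C $$ (k,l) * P2 $$ (l,b))"
      unfolding F_def by (simp add: sum.cartesian_product)
    also have "\<dots> = (\<Sum>e\<in>F. C $$ e * H e a b)"
      unfolding H_def by (intro sum.cong refl) (auto simp: algebra_simps)
    finally show ?thesis .
  qed
  have "finite F" unfolding F_def by simp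
  from gs_exists[OF this, of q s H, rule_format, of B]
  obtain c where c: "\<forall>e\<in>F. fip q s (\<lambda>a b. B a b - (\<Sum>e'\<in>F. c e' * H e' a b)) (H e) = 0" by blast
  define C0 where "C0 = mat n m (\<lambda>e. c e)"
  have C0: "C0 \<in> carrier_mat n m" unfolding C0_def by simp
  have C0e: "(\<Sum>e\<in>F. C0 $$ e * H e a b) = (\<Sum>e'\<in>F. c e' * H e' a b)" for a b
    unfolding C0_def F_def by (intro sum.cong) auto
  show ?thesis
  proof (intro bexI[OF _ C0] ballI)
    fix C :: "real mat" assume C: "C \<in> carrier_mat n m"
    have "fip q s (\<lambda>a b. B a b - (P1 * C0 * P2) $$ (a,b)) (\<lambda>a b. (P1 * C * P2) $$ (a,b))
       = fip q s (\<lambda>a b. B a b - (\<Sum>e'\<in>F. c e' * H e' a b)) (\<lambda>a b. \<Sum>e\<in>F. C $$ e * H e a b)"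
      by (rule fip_cong) (auto simp: ent[OF C0] ent[OF C] C0e)
    also have "\<dots> = 0" unfolding fip_sum2 using c by simp
    finally show "fip q s (\<lambda>a b. B a b - (P1 * C0 * P2) $$ (a,b)) (\<lambda>a b. (P1 * C * P2) $$ (a,b)) = 0" .
  qed
qed

lemma set_integrable_sum':
  fixes f :: "'i \<Rightarrow> 'a \<Rightarrow> real"
  shows "(\<And>i. i \<in> I \<Longrightarrow> set_integrable M A (f i)) \<Longrightarrow> set_integrable M A (\<lambda>x. \<Sum>i\<in>I. f i x)"
  unfolding set_integrable_def by (simp add: sum_distrib_left)

lemma set_integral_sum':
  fixes f :: "'i \<Rightarrow> 'a \<Rightarrow> real"
  shows "(\<And>i. i \<in> I \<Longrightarrow> set_integrable M A (f i)) \<Longrightarrow> (LINT x:A|M. (\<Sum>i\<in>I. f i x)) = (\<Sum>i\<in>I. LINT x:A|M. f i x)"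
  unfolding set_integrable_def set_lebesgue_integral_def
  by (simp add: sum_distrib_left integral_sum)

lemma set_integral_sum4:
  fixes f :: "nat \<Rightarrow> nat \<Rightarrow> nat \<Rightarrow> nat \<Rightarrow> 'a \<Rightarrow> real"
  assumes "\<And>i j k l. i \<in> I \<Longrightarrow> j \<in> J \<Longrightarrow> k \<in> K \<Longrightarrow> l \<in> L \<Longrightarrow> set_integrable M A (f i j k l)"
  shows "(LINT x:A|M. (\<Sum>i\<in>I. \<Sum>j\<in>J. \<Sum>k\<in>K. \<Sum>l\<in>L. f i j k l x))
     = (\<Sum>i\<in>I. \<Sum>j\<in>J. \<Sum>k\<in>K. \<Sum>l\<in>L. LINT x:A|M. f i j k l x)"
  using assms by (simp add: set_integral_sum' set_integrable_sum')

lemma sq_bound: "\<bar>(a::real) * b\<bar> \<le> a\<^sup>2 + b\<^sup>2"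
proof -
  have "0 \<le> (\<bar>a\<bar> - \<bar>b\<bar>)\<^sup>2" by simp
  hence "2 * \<bar>a\<bar> * \<bar>b\<bar> \<le> a\<^sup>2 + b\<^sup>2" by (simp add: power2_eq_square algebra_simps)
  moreover have "\<bar>a * b\<bar> \<le> 2 * \<bar>a\<bar> * \<bar>b\<bar>" by (simp add: abs_mult)
  ultimately show ?thesis by linarith
qed

lemma set_integrable_prod:
  fixes f g :: "'a::euclidean_space \<Rightarrow> real"
  assumes S: "S \<in> sets lborel" and f: "f \<in> borel_measurable lborel" and g: "g \<in> borel_measurable lborel"
    and f2: "set_integrable lborel S (\<lambda>x. (f x)\<^sup>2)" and g2: "set_integrable lborel S (\<lambda>x. (g x)\<^sup>2)"
  shows "set_integrable lborel S (\<lambda>x. f x * g x)"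
proof (rule set_integrable_bound[OF set_integral_add(1)[OF f2 g2]])
  show "set_borel_measurable lborel S (\<lambda>x. f x * g x)"
    unfolding set_borel_measurable_def by (intro borel_measurable_scaleR borel_measurable_indicator borel_measurable_times f g S)
  show "AE x in lborel. x \<in> S \<longrightarrow> norm (f x * g x) \<le> norm ((f x)\<^sup>2 + (g x)\<^sup>2)"
    using sq_bound by (auto intro!: AE_I2 simp del: abs_mult)
qed

lemma ip_mtf:
  fixes \<Omega> :: "'d::euclidean_space set"
  assumes psi: "\<forall>j<s. \<psi> j \<in> borel_measurable lborel \<and> set_integrable lborel {0..T} (\<lambda>t. (\<psi> j t)\<^sup>2)"
    and nu: "\<forall>i<q. \<nu> i \<in> borel_measurable lborel \<and> set_integrable lborel \<Omega> (\<lambda>\<xi>. (\<nu> i \<xi>)\<^sup>2)"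
    and Om: "\<Omega> \<in> sets lborel"
    and C: "C \<in> carrier_mat q s" and C': "C' \<in> carrier_mat q s"
  shows "ip_SY T \<Omega> (mat_to_fun \<nu> \<psi> C) (mat_to_fun \<nu> \<psi> C') =
    (\<Sum>i<q. \<Sum>k<q. \<Sum>j<s. \<Sum>l<s. C $$ (i,j) * C' $$ (k,l) * ip_Om \<Omega> (\<nu> i) (\<nu> k) * ip_T T (\<psi> j) (\<psi> l))"
proof -
  have mtf: "mat_to_fun \<nu> \<psi> D = (\<lambda>t \<xi>. \<Sum>i<q. \<Sum>j<s. D $$ (i,j) * \<nu> i \<xi> * \<psi> j t)"
    if "D \<in> carrier_mat q s" for D :: "real mat" using that unfolding mat_to_fun_def by auto
  have nuint: "set_integrable lborel \<Omega> (\<lambda>\<xi>. \<nu> i \<xi> * \<nu> k \<xi>)" if "i < q" "k < q" for i k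
    using nu that by (intro set_integrable_prod Om) auto
  have psint: "set_integrable lborel {0..T} (\<lambda>t. \<psi> j t * \<psi> l t)" if "j < s" "l < s" for j l
    using psi that by (intro set_integrable_prod) auto
  have inner: "(LINT \<xi>:\<Omega>|lborel. mat_to_fun \<nu> \<psi> C t \<xi> * mat_to_fun \<nu> \<psi> C' t \<xi>) =
     (\<Sum>i<q. \<Sum>k<q. \<Sum>j<s. \<Sum>l<s. (C $$ (i,j) * C' $$ (k,l) * ip_Om \<Omega> (\<nu> i) (\<nu> k)) * (\<psi> j t * \<psi> l t))" for t
  proof -
    have "(LINT \<xi>:\<Omega>|lborel. mat_to_fun \<nu> \<psi> C t \<xi> * mat_to_fun \<nu> \<psi> C' t \<xi>) =
      (LINT \<xi>:\<Omega>|lborel. (\<Sum>i<q. \<Sum>k<q. \<Sum>j<s. \<Sum>l<s. (C $$ (i,j) * C' $$ (k,l) * \<psi> j t * \<psi> l t) * (\<nu> i \<xi> * \<nu> k \<xi>)))"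
      unfolding mtf[OF C] mtf[OF C'] by (simp add: sum_product mult_ac)
    also have "\<dots> = (\<Sum>i<q. \<Sum>k<q. \<Sum>j<s. \<Sum>l<s. LINT \<xi>:\<Omega>|lborel. (C $$ (i,j) * C' $$ (k,l) * \<psi> j t * \<psi> l t) * (\<nu> i \<xi> * \<nu> k \<xi>))"
      by (rule set_integral_sum4) (auto intro: nuint)
    also have "\<dots> = (\<Sum>i<q. \<Sum>k<q. \<Sum>j<s. \<Sum>l<s. (C $$ (i,j) * C' $$ (k,l) * ip_Om \<Omega> (\<nu> i) (\<nu> k)) * (\<psi> j t * \<psi> l t))"
      unfolding ip_Om_def by (simp only: set_integral_mult_right) (simp add: mult_ac)
    finally show ?thesis .
  qed
  have "ip_SY T \<Omega> (mat_to_fun \<nu> \<psi> C) (mat_to_fun \<nu> \<psi> C') =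
     (LINT t:{0..T}|lborel. (\<Sum>i<q. \<Sum>k<q. \<Sum>j<s. \<Sum>l<s. (C $$ (i,j) * C' $$ (k,l) * ip_Om \<Omega> (\<nu> i) (\<nu> k)) * (\<psi> j t * \<psi> l t)))"
    unfolding ip_SY_def inner ..
  also have "\<dots> = (\<Sum>i<q. \<Sum>k<q. \<Sum>j<s. \<Sum>l<s. LINT t:{0..T}|lborel. (C $$ (i,j) * C' $$ (k,l) * ip_Om \<Omega> (\<nu> i) (\<nu> k)) * (\<psi> j t * \<psi> l t))"
    by (rule set_integral_sum4) (auto intro: psint)
  also have "\<dots> = (\<Sum>i<q. \<Sum>k<q. \<Sum>j<s. \<Sum>l<s. C $$ (i,j) * C' $$ (k,l) * ip_Om \<Omega> (\<nu> i) (\<nu> k) * ip_T T (\<psi> j) (\<psi> l))"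
    unfolding ip_T_def by (simp only: set_integral_mult_right)
  finally show ?thesis .
qed

lemma sum22_swap: "(\<Sum>a\<in>A. \<Sum>b\<in>B. \<Sum>i\<in>I. \<Sum>j\<in>J. f a b i j) = (\<Sum>i\<in>I. \<Sum>j\<in>J. \<Sum>a\<in>A. \<Sum>b\<in>B. f a b i j)"
proof -
  have "(\<Sum>a\<in>A. \<Sum>b\<in>B. \<Sum>i\<in>I. \<Sum>j\<in>J. f a b i j) = (\<Sum>a\<in>A. \<Sum>i\<in>I. \<Sum>j\<in>J. \<Sum>b\<in>B. f a b i j)"
    by (rule sum.cong[OF refl]) (rule sum3_swap[symmetric])
  also have "\<dots> = (\<Sum>i\<in>I. \<Sum>j\<in>J. \<Sum>a\<in>A. \<Sum>b\<in>B. f a b i j)"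
    by (rule sum3_swap[symmetric])
  finally show ?thesis .
qed

lemma fip_transform:
  assumes P: "P \<in> carrier_mat q q'" and C: "C \<in> carrier_mat q s" and Q: "Q \<in> carrier_mat s s'"
    and N: "N \<in> carrier_mat q' s'"
  shows "fip q' s' (\<lambda>a b. (transpose_mat P * C * Q) $$ (a,b)) (\<lambda>a b. N $$ (a,b))
     = (\<Sum>i<q. \<Sum>j<s. C $$ (i,j) * (P * N * transpose_mat Q) $$ (i,j))"
proof -
  have "fip q' s' (\<lambda>a b. (transpose_mat P * C * Q) $$ (a,b)) (\<lambda>a b. N $$ (a,b))
    = (\<Sum>a<q'. \<Sum>b<s'. (\<Sum>i<q. \<Sum>j<s. P $$ (i,a) * C $$ (i,j) * Q $$ (j,b)) * N $$ (a,b))"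
    unfolding fip_def using P C Q by (intro sum.cong refl) (subst mult3_entry[of _ q' q _ s _ s'], auto)
  also have "\<dots> = (\<Sum>a<q'. \<Sum>b<s'. \<Sum>i<q. \<Sum>j<s. C $$ (i,j) * (P $$ (i,a) * N $$ (a,b) * Q $$ (j,b)))"
    by (simp add: sum_distrib_right sum_distrib_left mult_ac)
  also have "\<dots> = (\<Sum>i<q. \<Sum>j<s. \<Sum>a<q'. \<Sum>b<s'. C $$ (i,j) * (P $$ (i,a) * N $$ (a,b) * Q $$ (j,b)))"
    by (rule sum22_swap)
  also have "\<dots> = (\<Sum>i<q. \<Sum>j<s. C $$ (i,j) * (P * N * transpose_mat Q) $$ (i,j))"
    using P N Q by (intro sum.cong refl) (subst mult3_entry[of _ q q' _ s' _ s], auto simp: sum_distrib_left)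
  finally show ?thesis .
qed

lemma sum4_to_mat:
  fixes C C' M1 M2 :: "real mat"
  assumes M1: "M1 \<in> carrier_mat q q" and C': "C' \<in> carrier_mat q s" and M2: "M2 \<in> carrier_mat s s"
  shows "(\<Sum>i<q. \<Sum>k<q. \<Sum>j<s. \<Sum>l<s. C $$ (i,j) * C' $$ (k,l) * M1 $$ (i,k) * M2 $$ (j,l))
    = (\<Sum>i<q. \<Sum>j<s. C $$ (i,j) * (M1 * C' * transpose_mat M2) $$ (i,j))"
proof -
  have "(\<Sum>i<q. \<Sum>k<q. \<Sum>j<s. \<Sum>l<s. C $$ (i,j) * C' $$ (k,l) * M1 $$ (i,k) * M2 $$ (j,l))
     = (\<Sum>i<q. \<Sum>j<s. \<Sum>k<q. \<Sum>l<s. C $$ (i,j) * C' $$ (k,l) * M1 $$ (i,k) * M2 $$ (j,l))"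
    by (rule sum.cong[OF refl]) (rule sum.swap)
  also have "\<dots> = (\<Sum>i<q. \<Sum>j<s. C $$ (i,j) * (M1 * C' * transpose_mat M2) $$ (i,j))"
    using M1 C' M2 by (intro sum.cong refl) (subst mult3_entry[of _ q q _ s _ s], auto simp: sum_distrib_left mult_ac intro!: sum.cong)
  finally show ?thesis .
qed

lemma sum_lt_if: "(k::nat) \<le> q \<Longrightarrow> (\<Sum>i<k. g i) = (\<Sum>i<q. if i < k then g i else (0::real))"
proof -
  assume kq: "k \<le> q"
  have "(\<Sum>i<q. if i < k then g i else 0) = (\<Sum>i\<in>{i\<in>{..<q}. i < k}. g i)"
    by (rule sum.inter_filter[symmetric], simp)
  also have "{i\<in>{..<q}. i < k} = {..<k}" using kq by auto
  finally show ?thesis by simp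
qed

lemma sum_ge_if: "(k::nat) \<le> q \<Longrightarrow> (\<Sum>i\<in>{k..<q}. g i) = (\<Sum>i<q. if i < k then 0 else (g i::real))"
proof -
  assume kq: "k \<le> q"
  have "(\<Sum>i<q. if i < k then 0 else g i) = (\<Sum>i<q. if \<not> i < k then g i else 0)"
    by (intro sum.cong) auto
  also have "\<dots> = (\<Sum>i\<in>{i\<in>{..<q}. \<not> i < k}. g i)"
    by (rule sum.inter_filter[symmetric], simp)
  also have "{i\<in>{..<q}. \<not> i < k} = {k..<q}" using kq by auto
  finally show ?thesis by simp
qed

lemma svd_tail_left:
  fixes A U D V :: "real mat"
  assumes U: "U \<in> carrier_mat q q" and V: "V \<in> carrier_mat s s" and D: "D \<in> carrier_mat q s"
    and UU: "transpose_mat U * U = 1\<^sub>m q" and VV: "transpose_mat V * V = 1\<^sub>m s"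
    and Dd: "\<forall>i<q. \<forall>j<s. i \<noteq> j \<longrightarrow> D $$ (i,j) = 0"
    and A: "A = U * D * transpose_mat V" and kq: "k \<le> q"
  shows "fip q s (\<lambda>a b. A $$ (a,b) - (mat q k (\<lambda>(i,j). U $$ (i,j)) * (transpose_mat (mat q k (\<lambda>(i,j). U $$ (i,j))) * A)) $$ (a,b))
                 (\<lambda>a b. A $$ (a,b) - (mat q k (\<lambda>(i,j). U $$ (i,j)) * (transpose_mat (mat q k (\<lambda>(i,j). U $$ (i,j))) * A)) $$ (a,b))
     = (\<Sum>i\<in>{k..<q}. if i < s then (D $$ (i,i))\<^sup>2 else 0)"
proof -
  define Uk where "Uk = mat q k (\<lambda>(i,j). U $$ (i,j))"
  define M where "M = transpose_mat U * A"
  define M' where "M' = mat q s (\<lambda>(i,b). if i < k then 0 else M $$ (i,b))"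
  have Ac: "A \<in> carrier_mat q s" using A U D V by auto
  have Mc: "M \<in> carrier_mat q s" unfolding M_def using U Ac by auto
  have M'c: "M' \<in> carrier_mat q s" unfolding M'_def by auto
  have UU': "U * transpose_mat U = 1\<^sub>m q" using mat_mult_left_right_inverse[OF _ U UU] U by auto
  have AUM: "A = U * M"
  proof -
    have "U * M = U * transpose_mat U * A" unfolding M_def
      using assoc_mult_mat[of U q q "transpose_mat U" q A s] U Ac by simp
    thus ?thesis using UU' Ac by simp
  qed
  have MD: "M = D * transpose_mat V"
  proof -
    have "M = transpose_mat U * (U * (D * transpose_mat V))" unfolding M_def A
      using U D V by (simp add: assoc_mult_mat[of U q q D s "transpose_mat V" s])
    also have "\<dots> = (transpose_mat U * U) * (D * transpose_mat V)"
      using U D V by (simp add: assoc_mult_mat[of "transpose_mat U" q q U q "D * transpose_mat V" s])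
    finally show ?thesis using UU D V by simp
  qed
  have Aent: "A $$ (a,b) = (\<Sum>i<q. U $$ (a,i) * M $$ (i,b))" if "a < q" "b < s" for a b
    using that U Mc by (subst AUM) (rule mult_entry)
  have UkAent: "(Uk * (transpose_mat Uk * A)) $$ (a,b) = (\<Sum>i<q. if i < k then U $$ (a,i) * M $$ (i,b) else 0)"
    if "a < q" "b < s" for a b
  proof -
    have "(Uk * (transpose_mat Uk * A)) $$ (a,b) = (\<Sum>i<k. Uk $$ (a,i) * (transpose_mat Uk * A) $$ (i,b))"
      using that Ac by (intro mult_entry[of _ q k _ s]) (auto simp: Uk_def)
    also have "\<dots> = (\<Sum>i<k. U $$ (a,i) * M $$ (i,b))"
    proof (intro sum.cong refl)
      fix i assume i: "i \<in> {..<k}"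
      have "(transpose_mat Uk * A) $$ (i,b) = (\<Sum>c<q. transpose_mat Uk $$ (i,c) * A $$ (c,b))"
        using i that Ac by (intro mult_entry[of _ k q _ s]) (auto simp: Uk_def)
      also have "\<dots> = (\<Sum>c<q. transpose_mat U $$ (i,c) * A $$ (c,b))"
        using i kq U by (intro sum.cong refl) (auto simp: Uk_def)
      also have "\<dots> = M $$ (i,b)" unfolding M_def using i kq that U Ac
        by (subst mult_entry[of _ q q _ s]) auto
      finally show "Uk $$ (a,i) * (transpose_mat Uk * A) $$ (i,b) = U $$ (a,i) * M $$ (i,b)"
        using i kq that by (simp add: Uk_def)
    qed
    also have "\<dots> = (\<Sum>i<q. if i < k then U $$ (a,i) * M $$ (i,b) else 0)"
      by (rule sum_lt_if[OF kq])
    finally show ?thesis .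
  qed
  have diff: "A $$ (a,b) - (Uk * (transpose_mat Uk * A)) $$ (a,b) = (U * M') $$ (a,b)" if "a < q" "b < s" for a b
  proof -
    have "(U * M') $$ (a,b) = (\<Sum>i<q. U $$ (a,i) * M' $$ (i,b))"
      using that U M'c by (intro mult_entry) auto
    also have "\<dots> = (\<Sum>i<q. U $$ (a,i) * M $$ (i,b) - (if i < k then U $$ (a,i) * M $$ (i,b) else 0))"
      using that by (intro sum.cong refl) (auto simp: M'_def)
    finally show ?thesis using that by (simp add: Aent UkAent sum_subtractf)
  qed
  have "fip q s (\<lambda>a b. A $$ (a,b) - (Uk * (transpose_mat Uk * A)) $$ (a,b))
                 (\<lambda>a b. A $$ (a,b) - (Uk * (transpose_mat Uk * A)) $$ (a,b))
      = fip q s (\<lambda>a b. (transpose_mat (transpose_mat U) * M' * 1\<^sub>m s) $$ (a,b)) (\<lambda>a b. (U * M') $$ (a,b))"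
    using M'c by (intro fip_cong) (auto simp: diff)
  also have "\<dots> = (\<Sum>i<q. \<Sum>j<s. M' $$ (i,j) * (transpose_mat U * (U * M') * transpose_mat (1\<^sub>m s)) $$ (i,j))"
    using U M'c by (intro fip_transform) auto
  also have "transpose_mat U * (U * M') * transpose_mat (1\<^sub>m s) = M'"
  proof -
    have "transpose_mat U * (U * M') = (transpose_mat U * U) * M'"
      using U M'c by (simp add: assoc_mult_mat[of "transpose_mat U" q q U q M' s])
    thus ?thesis using UU M'c by simp
  qed
  also have "(\<Sum>i<q. \<Sum>j<s. M' $$ (i,j) * M' $$ (i,j)) = (\<Sum>i<q. if i < k then 0 else (\<Sum>j<s. M $$ (i,j) * M $$ (i,j)))"
    by (intro sum.cong refl) (auto simp: M'_def)
  also have "\<dots> = (\<Sum>i\<in>{k..<q}. \<Sum>j<s. M $$ (i,j) * M $$ (i,j))"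
    by (rule sum_ge_if[OF kq, symmetric])
  also have "\<dots> = (\<Sum>i\<in>{k..<q}. if i < s then (D $$ (i,i))\<^sup>2 else 0)"
  proof (intro sum.cong refl)
    fix i assume i: "i \<in> {k..<q}"
    have Ment: "M $$ (i,j) = (\<Sum>c<s. D $$ (i,c) * V $$ (j,c))" if "j < s" for j
      using i that D V by (subst MD, subst mult_entry[of _ q s _ s]) auto
    show "(\<Sum>j<s. M $$ (i,j) * M $$ (i,j)) = (if i < s then (D $$ (i,i))\<^sup>2 else 0)"
    proof (cases "i < s")
      case True
      have "M $$ (i,j) = D $$ (i,i) * V $$ (j,i)" if "j < s" for j
      proof -
        have "(\<Sum>c<s. D $$ (i,c) * V $$ (j,c)) = (\<Sum>c<s. if c = i then D $$ (i,i) * V $$ (j,i) else 0)"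
          using i Dd by (intro sum.cong refl) auto
        thus ?thesis using True Ment[OF that] by simp
      qed
      hence "(\<Sum>j<s. M $$ (i,j) * M $$ (i,j)) = (D $$ (i,i))\<^sup>2 * (\<Sum>j<s. V $$ (j,i) * V $$ (j,i))"
        by (simp add: sum_distrib_left power2_eq_square mult_ac)
      also have "(\<Sum>j<s. V $$ (j,i) * V $$ (j,i)) = (transpose_mat V * V) $$ (i,i)"
        using True V by (subst mult_entry[of _ s s _ s]) auto
      also have "\<dots> = 1" using VV True by simp
      finally show ?thesis using True by simp
    next
      case False
      have "M $$ (i,j) = 0" if "j < s" for j
        using Ment[OF that] False i Dd by (auto intro!: sum.neutral)
      thus ?thesis using False by simp
    qed
  qed
  finally show ?thesis unfolding Uk_def .
qed

lemma fip_transp: "fip s q (\<lambda>a b. f b a) (\<lambda>a b. g b a) = fip q s f g"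
  unfolding fip_def by (rule sum.swap)

lemma svd_left:
  fixes A U D V :: "real mat"
  assumes svd: "is_svd A U D V" and Ac: "A \<in> carrier_mat q s" and kq: "k \<le> q"
  shows "fip q s (\<lambda>a b. A $$ (a,b) - (mat q k (\<lambda>(i,j). U $$ (i,j)) * (transpose_mat (mat q k (\<lambda>(i,j). U $$ (i,j))) * A)) $$ (a,b))
                 (\<lambda>a b. A $$ (a,b) - (mat q k (\<lambda>(i,j). U $$ (i,j)) * (transpose_mat (mat q k (\<lambda>(i,j). U $$ (i,j))) * A)) $$ (a,b))
     = (\<Sum>i\<in>{k..<q}. (sing_val D i)\<^sup>2)"
proof -
  have dims: "dim_row A = q" "dim_col A = s" using Ac by auto
  note sv = svd[unfolded is_svd_def dims]
  have "fip q s (\<lambda>a b. A $$ (a,b) - (mat q k (\<lambda>(i,j). U $$ (i,j)) * (transpose_mat (mat q k (\<lambda>(i,j). U $$ (i,j))) * A)) $$ (a,b))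
                 (\<lambda>a b. A $$ (a,b) - (mat q k (\<lambda>(i,j). U $$ (i,j)) * (transpose_mat (mat q k (\<lambda>(i,j). U $$ (i,j))) * A)) $$ (a,b))
     = (\<Sum>i\<in>{k..<q}. if i < s then (D $$ (i,i))\<^sup>2 else 0)"
    using sv kq by (intro svd_tail_left[of U q V s D]) auto
  also have "\<dots> = (\<Sum>i\<in>{k..<q}. (sing_val D i)\<^sup>2)"
    using sv by (intro sum.cong refl) (auto simp: sing_val_def)
  finally show ?thesis .
qed

lemma svd_right:
  fixes A U D V :: "real mat"
  assumes svd: "is_svd A U D V" and Ac: "A \<in> carrier_mat q s" and ks: "k \<le> s"
  shows "fip q s (\<lambda>a b. A $$ (a,b) - (A * (mat s k (\<lambda>(i,j). V $$ (i,j)) * transpose_mat (mat s k (\<lambda>(i,j). V $$ (i,j))))) $$ (a,b))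
                 (\<lambda>a b. A $$ (a,b) - (A * (mat s k (\<lambda>(i,j). V $$ (i,j)) * transpose_mat (mat s k (\<lambda>(i,j). V $$ (i,j))))) $$ (a,b))
     = (\<Sum>j\<in>{k..<s}. (sing_val D j)\<^sup>2)"
proof -
  define Vk where "Vk = mat s k (\<lambda>(i,j). V $$ (i,j))"
  have Vk: "Vk \<in> carrier_mat s k" unfolding Vk_def by simp
  have dims: "dim_row A = q" "dim_col A = s" using Ac by auto
  note sv = svd[unfolded is_svd_def dims]
  have U: "U \<in> carrier_mat q q" and V: "V \<in> carrier_mat s s" and D: "D \<in> carrier_mat q s" using sv by auto
  have At: "transpose_mat A = V * transpose_mat D * transpose_mat U"
  proof -
    have A: "A = U * D * transpose_mat V" using sv by blast
    have UD: "U * D \<in> carrier_mat q s" using U D by simp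
    have t1: "transpose_mat (U * D * transpose_mat V) = transpose_mat (transpose_mat V) * transpose_mat (U * D)"
      by (rule transpose_mult[OF UD]) (use V in simp)
    have t2: "transpose_mat (U * D) = transpose_mat D * transpose_mat U"
      by (rule transpose_mult[OF U D])
    have t3: "V * (transpose_mat D * transpose_mat U) = V * transpose_mat D * transpose_mat U"
      by (rule assoc_mult_mat[symmetric]) (use V D U in auto)
    show ?thesis unfolding A t1 t2 transpose_transpose t3 ..
  qed
  have ent: "(Vk * (transpose_mat Vk * transpose_mat A)) $$ (a,b) = (A * (Vk * transpose_mat Vk)) $$ (b,a)"
    if "a < s" "b < q" for a b
  proof -
    have t1: "transpose_mat (A * (Vk * transpose_mat Vk)) = transpose_mat (Vk * transpose_mat Vk) * transpose_mat A"
      using Ac Vk by (intro transpose_mult[of _ q s]) auto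
    have t2: "transpose_mat (Vk * transpose_mat Vk) = Vk * transpose_mat Vk"
      using Vk by (simp add: transpose_mult[of Vk s k])
    have t3: "Vk * transpose_mat Vk * transpose_mat A = Vk * (transpose_mat Vk * transpose_mat A)"
      using Vk Ac by (intro assoc_mult_mat) auto
    have "transpose_mat (A * (Vk * transpose_mat Vk)) = Vk * (transpose_mat Vk * transpose_mat A)"
      unfolding t1 t2 t3 ..
    hence "(Vk * (transpose_mat Vk * transpose_mat A)) $$ (a,b) = transpose_mat (A * (Vk * transpose_mat Vk)) $$ (a,b)"
      by simp
    also have "\<dots> = (A * (Vk * transpose_mat Vk)) $$ (b,a)" using that Ac Vk by simp
    finally show ?thesis .
  qed
  have sw: "fip s q (\<lambda>a b. transpose_mat A $$ (a,b) - (Vk * (transpose_mat Vk * transpose_mat A)) $$ (a,b))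
                 (\<lambda>a b. transpose_mat A $$ (a,b) - (Vk * (transpose_mat Vk * transpose_mat A)) $$ (a,b))
     = fip s q (\<lambda>a b. A $$ (b,a) - (A * (Vk * transpose_mat Vk)) $$ (b,a))
                 (\<lambda>a b. A $$ (b,a) - (A * (Vk * transpose_mat Vk)) $$ (b,a))"
    using Ac by (intro fip_cong) (auto simp: ent)
  define F where "F = (\<lambda>a b. A $$ (a,b) - (A * (Vk * transpose_mat Vk)) $$ (a,b))"
  have "fip q s F F = fip s q (\<lambda>a b. F b a) (\<lambda>a b. F b a)" by (rule fip_transp[symmetric])
  also have "\<dots>
     = (\<Sum>j\<in>{k..<s}. if j < q then (transpose_mat D $$ (j,j))\<^sup>2 else 0)"
  proof -
    have "fip s q (\<lambda>a b. F b a) (\<lambda>a b. F b a) = fip s q (\<lambda>a b. transpose_mat A $$ (a,b) - (Vk * (transpose_mat Vk * transpose_mat A)) $$ (a,b))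
                 (\<lambda>a b. transpose_mat A $$ (a,b) - (Vk * (transpose_mat Vk * transpose_mat A)) $$ (a,b))"
      unfolding F_def sw ..
    also have "\<dots> = (\<Sum>j\<in>{k..<s}. if j < q then (transpose_mat D $$ (j,j))\<^sup>2 else 0)"
      unfolding Vk_def
    proof (rule svd_tail_left[OF V U _ _ _ _ At ks])
      show "transpose_mat D \<in> carrier_mat s q" using D by simp
      show "transpose_mat V * V = 1\<^sub>m s" using sv by blast
      show "transpose_mat U * U = 1\<^sub>m q" using sv by blast
      show "\<forall>i<s. \<forall>j<q. i \<noteq> j \<longrightarrow> transpose_mat D $$ (i, j) = 0" using sv D by auto
    qed
    finally show ?thesis .
  qed
  also have "\<dots> = (\<Sum>j\<in>{k..<s}. (sing_val D j)\<^sup>2)"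
    using sv D by (intro sum.cong refl) (auto simp: sing_val_def)
  finally show ?thesis unfolding F_def Vk_def .
qed

lemma minv_props:
  fixes L :: "real mat"
  assumes inv: "invertible_mat L" and Lc: "L \<in> carrier_mat n n"
  shows "minv L \<in> carrier_mat n n" "L * minv L = 1\<^sub>m n" "minv L * L = 1\<^sub>m n"
proof -
  obtain B where B1: "L * B = 1\<^sub>m (dim_row L)" and B2: "B * L = 1\<^sub>m (dim_row B)"
    using inv unfolding invertible_mat_def inverts_mat_def by blast
  have "dim_col (L * B) = n" using B1 Lc by simp
  hence cB: "dim_col B = n" by simp
  have "dim_col (B * L) = dim_row B" using B2 by simp
  hence rB: "dim_row B = n" using Lc by simp
  have Bc: "B \<in> carrier_mat n n" using cB rB by auto
  have ex: "\<exists>M. M \<in> carrier_mat (dim_row L) (dim_row L) \<and> L * M = 1\<^sub>m (dim_row L) \<and> M * L = 1\<^sub>m (dim_row L)"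
    using Bc B1 B2 Lc rB by (intro exI[of _ B]) auto
  have "minv L \<in> carrier_mat (dim_row L) (dim_row L) \<and> L * minv L = 1\<^sub>m (dim_row L) \<and> minv L * L = 1\<^sub>m (dim_row L)"
    unfolding minv_def by (rule someI_ex[OF ex])
  thus "minv L \<in> carrier_mat n n" "L * minv L = 1\<^sub>m n" "minv L * L = 1\<^sub>m n" using Lc by auto
qed

lemma mult3_minus:
  fixes A C C' B :: "real mat"
  assumes "A \<in> carrier_mat r n" "C \<in> carrier_mat n m" "C' \<in> carrier_mat n m" "B \<in> carrier_mat m c" "i < r" "j < c"
  shows "(A * (C - C') * B) $$ (i,j) = (A * C * B) $$ (i,j) - (A * C' * B) $$ (i,j)"
proof -
  have e1: "(A * (C - C') * B) $$ (i,j) = (\<Sum>k<n. \<Sum>l<m. A $$ (i,k) * (C - C') $$ (k,l) * B $$ (l,j))"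
    by (rule mult3_entry) (use assms in auto)
  have e2: "(A * C * B) $$ (i,j) = (\<Sum>k<n. \<Sum>l<m. A $$ (i,k) * C $$ (k,l) * B $$ (l,j))"
    by (rule mult3_entry) (use assms in auto)
  have e3: "(A * C' * B) $$ (i,j) = (\<Sum>k<n. \<Sum>l<m. A $$ (i,k) * C' $$ (k,l) * B $$ (l,j))"
    by (rule mult3_entry) (use assms in auto)
  show ?thesis unfolding e1 e2 e3 sum_subtractf[symmetric]
    by (intro sum.cong refl) (use assms in \<open>auto simp: algebra_simps\<close>)
qed

lemma mtf_core:
  fixes W W' C :: "real mat"
  assumes W: "W \<in> carrier_mat n q" and W': "W' \<in> carrier_mat m s" and C: "C \<in> carrier_mat n m"
  shows "(\<lambda>t \<xi>. \<Sum>k<n. \<Sum>l<m. C $$ (k,l) * (\<Sum>i<q. W $$ (k,i) * \<nu> i \<xi>) * (\<Sum>j<s. W' $$ (l,j) * \<psi> j t))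
     = mat_to_fun \<nu> \<psi> (transpose_mat W * C * W')"
proof (intro ext)
  fix t \<xi>
  have "(\<Sum>k<n. \<Sum>l<m. C $$ (k,l) * (\<Sum>i<q. W $$ (k,i) * \<nu> i \<xi>) * (\<Sum>j<s. W' $$ (l,j) * \<psi> j t))
     = (\<Sum>k<n. \<Sum>l<m. \<Sum>i<q. \<Sum>j<s. W $$ (k,i) * C $$ (k,l) * W' $$ (l,j) * \<nu> i \<xi> * \<psi> j t)"
    by (simp add: sum_distrib_left sum_distrib_right mult_ac)
  also have "\<dots> = (\<Sum>i<q. \<Sum>j<s. \<Sum>k<n. \<Sum>l<m. W $$ (k,i) * C $$ (k,l) * W' $$ (l,j) * \<nu> i \<xi> * \<psi> j t)"
    by (rule sum22_swap)
  also have "\<dots> = (\<Sum>i<q. \<Sum>j<s. (transpose_mat W * C * W') $$ (i,j) * \<nu> i \<xi> * \<psi> j t)"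
    using W W' C by (intro sum.cong refl) (subst mult3_entry[of _ q n _ m _ s], auto simp: sum_distrib_right)
  also have "\<dots> = mat_to_fun \<nu> \<psi> (transpose_mat W * C * W') t \<xi>"
    unfolding mat_to_fun_def using W W' by simp
  finally show "(\<Sum>k<n. \<Sum>l<m. C $$ (k,l) * (\<Sum>i<q. W $$ (k,i) * \<nu> i \<xi>) * (\<Sum>j<s. W' $$ (l,j) * \<psi> j t))
     = mat_to_fun \<nu> \<psi> (transpose_mat W * C * W') t \<xi>" .
qed

lemma prod_span_char:
  fixes W W' :: "real mat"
  assumes W: "W \<in> carrier_mat n q" and W': "W' \<in> carrier_mat m s"
  shows "prod_span n (\<lambda>k \<xi>. \<Sum>i<q. W $$ (k,i) * \<nu> i \<xi>) m (\<lambda>l t. \<Sum>j<s. W' $$ (l,j) * \<psi> j t)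
     = {mat_to_fun \<nu> \<psi> (transpose_mat W * C * W') | C. C \<in> carrier_mat n m}"
proof (intro equalityI subsetI)
  fix x assume "x \<in> prod_span n (\<lambda>k \<xi>. \<Sum>i<q. W $$ (k,i) * \<nu> i \<xi>) m (\<lambda>l t. \<Sum>j<s. W' $$ (l,j) * \<psi> j t)"
  then obtain Cf where x: "x = (\<lambda>t \<xi>. \<Sum>k<n. \<Sum>l<m. Cf k l * (\<Sum>i<q. W $$ (k,i) * \<nu> i \<xi>) * (\<Sum>j<s. W' $$ (l,j) * \<psi> j t))"
    unfolding prod_span_def mem_Collect_eq by auto
  define C where "C = mat n m (\<lambda>(k,l). Cf k l)"
  have C: "C \<in> carrier_mat n m" unfolding C_def by simp
  have "x = (\<lambda>t \<xi>. \<Sum>k<n. \<Sum>l<m. C $$ (k,l) * (\<Sum>i<q. W $$ (k,i) * \<nu> i \<xi>) * (\<Sum>j<s. W' $$ (l,j) * \<psi> j t))"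
    unfolding x C_def by (intro ext sum.cong refl) auto
  also have "\<dots> = mat_to_fun \<nu> \<psi> (transpose_mat W * C * W')" by (rule mtf_core[OF W W' C])
  finally show "x \<in> {mat_to_fun \<nu> \<psi> (transpose_mat W * C * W') | C. C \<in> carrier_mat n m}" using C by blast
next
  fix x assume "x \<in> {mat_to_fun \<nu> \<psi> (transpose_mat W * C * W') | C. C \<in> carrier_mat n m}"
  then obtain C where C: "C \<in> carrier_mat n m" and x: "x = mat_to_fun \<nu> \<psi> (transpose_mat W * C * W')" by blast
  show "x \<in> prod_span n (\<lambda>k \<xi>. \<Sum>i<q. W $$ (k,i) * \<nu> i \<xi>) m (\<lambda>l t. \<Sum>j<s. W' $$ (l,j) * \<psi> j t)"
    unfolding prod_span_def x mtf_core[OF W W' C, symmetric]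
    by (rule CollectI, rule exI[of _ "\<lambda>k l. C $$ (k,l)"]) simp
qed

lemma prod_span_cong:
  assumes "\<And>k. k < n \<Longrightarrow> \<nu>1 k = \<nu>2 k" "\<And>l. l < m \<Longrightarrow> \<psi>1 l = \<psi>2 l"
  shows "prod_span n \<nu>1 m \<psi>1 = prod_span n \<nu>2 m \<psi>2"
proof -
  have "(\<lambda>t \<xi>. \<Sum>i<n. \<Sum>j<m. C i j * \<nu>1 i \<xi> * \<psi>1 j t) = (\<lambda>t \<xi>. \<Sum>i<n. \<Sum>j<m. C i j * \<nu>2 i \<xi> * \<psi>2 j t)" for C
    using assms by (intro ext sum.cong refl) auto
  thus ?thesis unfolding prod_span_def by simp
qed

lemma one_comb: "l < s \<Longrightarrow> (\<lambda>t. \<Sum>j<s. (1\<^sub>m s :: real mat) $$ (l,j) * \<psi> j t) = \<psi> l"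
proof (intro ext)
  fix t assume l: "l < s"
  have "(\<Sum>j<s. (1\<^sub>m s :: real mat) $$ (l,j) * \<psi> j t) = (\<Sum>j<s. if j = l then \<psi> l t else 0)"
    using l by (intro sum.cong refl) auto
  also have "\<dots> = \<psi> l t" using l by (simp add: sum.delta)
  finally show "(\<Sum>j<s. (1\<^sub>m s :: real mat) $$ (l,j) * \<psi> j t) = \<psi> l t" .
qed

lemma assoc5:
  fixes A B C D E :: "'a::semiring_0 mat"
  assumes A: "A \<in> carrier_mat n1 n2" and B: "B \<in> carrier_mat n2 n3" and C: "C \<in> carrier_mat n3 n4"
    and D: "D \<in> carrier_mat n4 n5" and E: "E \<in> carrier_mat n5 n6"
  shows "A * B * C * (D * E) = A * (B * C * D) * E"
proof -
  have 1: "A * B * C * (D * E) = A * B * C * D * E"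
    using A B C D E by (intro assoc_mult_mat[symmetric, of _ n1 n4 _ n5 _ n6]) auto
  have 2: "A * B * C = A * (B * C)" using A B C by (intro assoc_mult_mat)
  have 3: "A * (B * C) * D = A * (B * C * D)" using A B C D by (intro assoc_mult_mat[of _ n1 n2 _ n4 _ n5]) auto
  show ?thesis unfolding 1 unfolding 2 unfolding 3 ..
qed

lemma mtf_diff:
  fixes A B :: "real mat"
  assumes "A \<in> carrier_mat q s" "B \<in> carrier_mat q s"
  shows "mat_to_fun \<nu> \<psi> A - mat_to_fun \<nu> \<psi> B = mat_to_fun \<nu> \<psi> (A - B)"
  using assms unfolding mat_to_fun_def fun_diff_def
  by (intro ext) (auto simp: sum_subtractf[symmetric] left_diff_distrib intro!: sum.cong)

locale setting =
  fixes T :: real and \<Omega> :: "'d::euclidean_space set" and \<psi> :: "nat \<Rightarrow> real \<Rightarrow> real"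
    and \<nu> :: "nat \<Rightarrow> 'd \<Rightarrow> real" and q s :: nat and LS LY :: "real mat"
  assumes psi_L2: "\<forall>j<s. \<psi> j \<in> borel_measurable lborel \<and> set_integrable lborel {0..T} (\<lambda>t. (\<psi> j t)\<^sup>2)"
    and nu_L2: "\<forall>i<q. \<nu> i \<in> borel_measurable lborel \<and> set_integrable lborel \<Omega> (\<lambda>\<xi>. (\<nu> i \<xi>)\<^sup>2)"
    and Om: "\<Omega> \<in> sets lborel"
    and LSc: "LS \<in> carrier_mat s s" and LSi: "invertible_mat LS" and LSg: "gram_T T s \<psi> = LS * transpose_mat LS"
    and LYc: "LY \<in> carrier_mat q q" and LYi: "invertible_mat LY" and LYg: "gram_Om \<Omega> q \<nu> = LY * transpose_mat LY"
begin

abbreviation "Psi M \<equiv> transpose_mat LY * M * LS"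
abbreviation "mtf \<equiv> mat_to_fun \<nu> \<psi>"

lemma Li: "minv LY \<in> carrier_mat q q" "LY * minv LY = 1\<^sub>m q" "minv LY * LY = 1\<^sub>m q"
  using minv_props[OF LYi LYc] by auto
lemma Si: "minv LS \<in> carrier_mat s s" "LS * minv LS = 1\<^sub>m s" "minv LS * LS = 1\<^sub>m s"
  using minv_props[OF LSi LSc] by auto

lemma ip_fip:
  assumes C: "C \<in> carrier_mat q s" and C': "C' \<in> carrier_mat q s"
  shows "ip_SY T \<Omega> (mtf C) (mtf C') = fip q s (\<lambda>a b. Psi C $$ (a,b)) (\<lambda>a b. Psi C' $$ (a,b))"
proof -
  have "ip_SY T \<Omega> (mtf C) (mtf C') =
    (\<Sum>i<q. \<Sum>k<q. \<Sum>j<s. \<Sum>l<s. C $$ (i,j) * C' $$ (k,l) * ip_Om \<Omega> (\<nu> i) (\<nu> k) * ip_T T (\<psi> j) (\<psi> l))"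
    by (rule ip_mtf[OF psi_L2 nu_L2 Om C C'])
  also have "\<dots> = (\<Sum>i<q. \<Sum>k<q. \<Sum>j<s. \<Sum>l<s. C $$ (i,j) * C' $$ (k,l) * (LY * transpose_mat LY) $$ (i,k) * (LS * transpose_mat LS) $$ (j,l))"
  proof (intro sum.cong refl)
    fix i k j l assume "i \<in> {..<q}" "k \<in> {..<q}" "j \<in> {..<s}" "l \<in> {..<s}"
    hence "ip_Om \<Omega> (\<nu> i) (\<nu> k) = (LY * transpose_mat LY) $$ (i,k)" "ip_T T (\<psi> j) (\<psi> l) = (LS * transpose_mat LS) $$ (j,l)"
      unfolding LYg[symmetric] LSg[symmetric] gram_Om_def gram_T_def by auto
    thus "C $$ (i,j) * C' $$ (k,l) * ip_Om \<Omega> (\<nu> i) (\<nu> k) * ip_T T (\<psi> j) (\<psi> l) =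
          C $$ (i,j) * C' $$ (k,l) * (LY * transpose_mat LY) $$ (i,k) * (LS * transpose_mat LS) $$ (j,l)" by simp
  qed
  also have "\<dots> = (\<Sum>i<q. \<Sum>j<s. C $$ (i,j) * ((LY * transpose_mat LY) * C' * transpose_mat (LS * transpose_mat LS)) $$ (i,j))"
    using LYc LSc C' by (intro sum4_to_mat) auto
  also have "(LY * transpose_mat LY) * C' * transpose_mat (LS * transpose_mat LS) = LY * Psi C' * transpose_mat LS"
  proof -
    have "transpose_mat (LS * transpose_mat LS) = LS * transpose_mat LS"
      using LSc by (simp add: transpose_mult[of LS s s])
    thus ?thesis using LYc LSc C' assoc5[of LY q q "transpose_mat LY" q C' s LS s "transpose_mat LS" s] by simp
  qed
  also have "(\<Sum>i<q. \<Sum>j<s. C $$ (i,j) * (LY * Psi C' * transpose_mat LS) $$ (i,j)) =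
     fip q s (\<lambda>a b. Psi C $$ (a,b)) (\<lambda>a b. Psi C' $$ (a,b))"
    using LYc LSc C C' by (intro fip_transform[symmetric]) auto
  finally show ?thesis .
qed

lemma LiT: "transpose_mat (minv LY) * transpose_mat LY = 1\<^sub>m q"
proof -
  have "transpose_mat (LY * minv LY) = transpose_mat (minv LY) * transpose_mat LY"
    using LYc Li by (intro transpose_mult) auto
  thus ?thesis using Li by simp
qed

lemma Psi_inv:
  assumes A: "A \<in> carrier_mat q s"
  shows "transpose_mat (minv LY) * Psi A * minv LS = A"
proof -
  have LYt: "transpose_mat LY \<in> carrier_mat q q" and LiT': "transpose_mat (minv LY) \<in> carrier_mat q q"
    using LYc Li by auto
  have 1: "transpose_mat (minv LY) * (transpose_mat LY * A * LS) = transpose_mat (minv LY) * (transpose_mat LY * A) * LS"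
    using LYt LiT' A LSc by (intro assoc_mult_mat[symmetric, of _ q q _ s _ s]) auto
  have 2: "transpose_mat (minv LY) * (transpose_mat LY * A) = transpose_mat (minv LY) * transpose_mat LY * A"
    using LYt LiT' A by (intro assoc_mult_mat[symmetric, of _ q q _ q _ s]) auto
  have 3: "A * LS * minv LS = A * (LS * minv LS)"
    using A LSc Si by (intro assoc_mult_mat[of _ q s _ s _ s]) auto
  show ?thesis unfolding 1 2 LiT left_mult_one_mat[OF A] 3 Si(2) right_mult_one_mat[OF A] ..
qed

lemma Psi_inj:
  assumes A: "A \<in> carrier_mat q s" and B: "B \<in> carrier_mat q s"
    and eq: "\<And>a b. a < q \<Longrightarrow> b < s \<Longrightarrow> Psi A $$ (a,b) = Psi B $$ (a,b)"
  shows "A = B"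
proof -
  have e: "Psi A = Psi B" using A B LYc LSc eq by (intro eq_matI) auto
  have f1: "transpose_mat (minv LY) * Psi B * minv LS = A" using Psi_inv[OF A] unfolding e .
  from f1[symmetric] Psi_inv[OF B] show ?thesis by (rule trans)
qed

lemma Psi_minus:
  assumes "A \<in> carrier_mat q s" "B \<in> carrier_mat q s" "a < q" "b < s"
  shows "Psi (A - B) $$ (a,b) = Psi A $$ (a,b) - Psi B $$ (a,b)"
  by (rule mult3_minus) (use assms LYc LSc in auto)

lemma norm_mtf:
  assumes A: "A \<in> carrier_mat q s" and B: "B \<in> carrier_mat q s"
  shows "norm_SY T \<Omega> (mtf A - mtf B) = sqrt (fip q s (\<lambda>a b. Psi A $$ (a,b) - Psi B $$ (a,b)) (\<lambda>a b. Psi A $$ (a,b) - Psi B $$ (a,b)))"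
proof -
  have AB: "A - B \<in> carrier_mat q s" using B by (rule minus_carrier_mat)
  have "norm_SY T \<Omega> (mtf A - mtf B) = sqrt (fip q s (\<lambda>a b. Psi (A - B) $$ (a,b)) (\<lambda>a b. Psi (A - B) $$ (a,b)))"
    unfolding norm_SY_def mtf_diff[OF A B] ip_fip[OF AB AB] ..
  also have "fip q s (\<lambda>a b. Psi (A - B) $$ (a,b)) (\<lambda>a b. Psi (A - B) $$ (a,b)) =
    fip q s (\<lambda>a b. Psi A $$ (a,b) - Psi B $$ (a,b)) (\<lambda>a b. Psi A $$ (a,b) - Psi B $$ (a,b))"
    using A B by (intro fip_cong) (auto simp: Psi_minus)
  finally show ?thesis .
qed

lemma coeff_mtf:
  assumes M: "M \<in> carrier_mat q s"
  shows "coeff_mat q s \<nu> \<psi> (mtf M) = M"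
  unfolding coeff_mat_def
proof (rule the_equality)
  show "M \<in> carrier_mat q s \<and> mtf M = mtf M" using M by simp
next
  fix X assume X: "X \<in> carrier_mat q s \<and> mtf M = mtf X"
  hence Xc: "X \<in> carrier_mat q s" by simp
  have MX: "M - X \<in> carrier_mat q s" using Xc by (rule minus_carrier_mat)
  have z: "mtf (M - X) = (\<lambda>t \<xi>. 0)" unfolding mtf_diff[OF M Xc, symmetric] using X by (simp add: fun_diff_def)
  have "fip q s (\<lambda>a b. Psi (M - X) $$ (a,b)) (\<lambda>a b. Psi (M - X) $$ (a,b)) = 0"
    using ip_fip[OF MX MX] unfolding z by (simp add: ip_SY_def)
  from fip_self_zero[OF this]
  have "Psi (M - X) $$ (a,b) = 0" if "a < q" "b < s" for a b using that by blast
  hence "Psi X $$ (a,b) = Psi M $$ (a,b)" if "a < q" "b < s" for a b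
    using that Psi_minus[OF M Xc that] by simp
  thus "X = M" using Psi_inj[OF Xc M] by blast
qed

lemma transfer:
  assumes W: "W \<in> carrier_mat n q" and W': "W' \<in> carrier_mat m s" and B: "B \<in> carrier_mat q s"
  shows "\<exists>C0 \<in> carrier_mat n m.
     orth_proj (ip_SY T \<Omega>) {mtf (transpose_mat W * C * W') | C. C \<in> carrier_mat n m} (mtf B) = mtf (transpose_mat W * C0 * W') \<and>
     (\<forall>C \<in> carrier_mat n m.
       fip q s (\<lambda>a b. Psi B $$ (a,b) - Psi (transpose_mat W * C0 * W') $$ (a,b)) (\<lambda>a b. Psi B $$ (a,b) - Psi (transpose_mat W * C0 * W') $$ (a,b))
     \<le> fip q s (\<lambda>a b. Psi B $$ (a,b) - Psi (transpose_mat W * C * W') $$ (a,b)) (\<lambda>a b. Psi B $$ (a,b) - Psi (transpose_mat W * C * W') $$ (a,b)))"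
proof -
  define P1 where "P1 = transpose_mat LY * transpose_mat W"
  define P2 where "P2 = W' * LS"
  have P1: "P1 \<in> carrier_mat q n" unfolding P1_def using LYc W by simp
  have P2: "P2 \<in> carrier_mat m s" unfolding P2_def using LSc W' by simp
  have WC: "transpose_mat W * C * W' \<in> carrier_mat q s" if "C \<in> carrier_mat n m" for C
    using W W' that by simp
  have PsiC: "Psi (transpose_mat W * C * W') = P1 * C * P2" if C: "C \<in> carrier_mat n m" for C
    unfolding P1_def P2_def using assoc5[of "transpose_mat LY" q q "transpose_mat W" n C m W' s LS s] LYc W W' LSc C
    by simp
  define Z where "Z = {mtf (transpose_mat W * C * W') | C. C \<in> carrier_mat n m}"
  obtain C0 where C0: "C0 \<in> carrier_mat n m" and orth: "\<forall>C \<in> carrier_mat n m.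
     fip q s (\<lambda>a b. Psi B $$ (a,b) - (P1 * C0 * P2) $$ (a,b)) (\<lambda>a b. (P1 * C * P2) $$ (a,b)) = 0"
    using proj_mat[OF P1 P2, of "\<lambda>a b. Psi B $$ (a,b)"] by blast
  have ipz: "ip_SY T \<Omega> (mtf B - mtf (transpose_mat W * C1 * W')) (mtf (transpose_mat W * C * W'))
     = fip q s (\<lambda>a b. Psi B $$ (a,b) - (P1 * C1 * P2) $$ (a,b)) (\<lambda>a b. (P1 * C * P2) $$ (a,b))"
    if C1: "C1 \<in> carrier_mat n m" and C: "C \<in> carrier_mat n m" for C1 C
  proof -
    have "ip_SY T \<Omega> (mtf B - mtf (transpose_mat W * C1 * W')) (mtf (transpose_mat W * C * W'))
      = fip q s (\<lambda>a b. Psi (B - transpose_mat W * C1 * W') $$ (a,b)) (\<lambda>a b. Psi (transpose_mat W * C * W') $$ (a,b))"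
      unfolding mtf_diff[OF B WC[OF C1]] using minus_carrier_mat[OF WC[OF C1]] WC[OF C] by (rule ip_fip)
    also have "\<dots> = fip q s (\<lambda>a b. Psi B $$ (a,b) - (P1 * C1 * P2) $$ (a,b)) (\<lambda>a b. (P1 * C * P2) $$ (a,b))"
      using B WC[OF C1] by (intro fip_cong) (auto simp: Psi_minus PsiC[OF C1] PsiC[OF C])
    finally show ?thesis .
  qed
  define p0 where "p0 = mtf (transpose_mat W * C0 * W')"
  have Qp0: "p0 \<in> Z \<and> (\<forall>z\<in>Z. ip_SY T \<Omega> (mtf B - p0) z = 0)"
  proof
    show "p0 \<in> Z" unfolding p0_def Z_def using C0 by blast
    show "\<forall>z\<in>Z. ip_SY T \<Omega> (mtf B - p0) z = 0"
    proof
      fix z assume "z \<in> Z"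
      then obtain C where C: "C \<in> carrier_mat n m" and z: "z = mtf (transpose_mat W * C * W')" unfolding Z_def by blast
      show "ip_SY T \<Omega> (mtf B - p0) z = 0" unfolding z p0_def ipz[OF C0 C] using orth C by blast
    qed
  qed
  have uniq: "p' = p0" if Q: "p' \<in> Z \<and> (\<forall>z\<in>Z. ip_SY T \<Omega> (mtf B - p') z = 0)" for p'
  proof -
    obtain C' where C': "C' \<in> carrier_mat n m" and p': "p' = mtf (transpose_mat W * C' * W')"
      using Q unfolding Z_def by blast
    have orth': "fip q s (\<lambda>a b. Psi B $$ (a,b) - (P1 * C' * P2) $$ (a,b)) (\<lambda>a b. (P1 * C * P2) $$ (a,b)) = 0"
      if C: "C \<in> carrier_mat n m" for C
    proof -
      have "mtf (transpose_mat W * C * W') \<in> Z" unfolding Z_def using C by blast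
      hence "ip_SY T \<Omega> (mtf B - p') (mtf (transpose_mat W * C * W')) = 0" using Q by blast
      thus ?thesis unfolding p' ipz[OF C' C] .
    qed
    have D: "C0 - C' \<in> carrier_mat n m" using C' by (rule minus_carrier_mat)
    define E where "E = (\<lambda>a b. (P1 * (C0 - C') * P2) $$ (a,b))"
    define R1 where "R1 = (\<lambda>a b. Psi B $$ (a,b) - (P1 * C' * P2) $$ (a,b))"
    define R0 where "R0 = (\<lambda>a b. Psi B $$ (a,b) - (P1 * C0 * P2) $$ (a,b))"
    have Eent: "E a b = R1 a b - R0 a b" if "a < q" "b < s" for a b
      unfolding E_def R1_def R0_def using mult3_minus[OF P1 C0 C' P2 that] by simp
    have "fip q s E E = fip q s (\<lambda>a b. R1 a b - R0 a b) E"
      by (intro fip_cong) (auto simp: Eent)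
    also have "\<dots> = fip q s R1 E - fip q s R0 E" by (rule fip_diff1)
    also have "fip q s R1 E = 0" unfolding R1_def E_def using orth'[OF D] .
    also have "fip q s R0 E = 0" unfolding R0_def E_def using orth D by blast
    finally have E0: "fip q s E E = 0" by simp
    have "Psi (transpose_mat W * C0 * W') $$ (a,b) = Psi (transpose_mat W * C' * W') $$ (a,b)" if ab: "a < q" "b < s" for a b
    proof -
      have "E a b = 0" using fip_self_zero[OF E0 ab] .
      thus ?thesis using Eent[OF ab] unfolding PsiC[OF C0] PsiC[OF C'] R1_def R0_def by simp
    qed
    hence "transpose_mat W * C0 * W' = transpose_mat W * C' * W'" using Psi_inj[OF WC[OF C0] WC[OF C']] by blast
    thus ?thesis unfolding p' p0_def by simp
  qed
  have proj: "orth_proj (ip_SY T \<Omega>) Z (mtf B) = p0"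
    unfolding orth_proj_def
  proof (rule the_equality)
    show "p0 \<in> Z \<and> (\<forall>z\<in>Z. ip_SY T \<Omega> (mtf B - p0) z = 0)" by (rule Qp0)
  next
    fix p' assume "p' \<in> Z \<and> (\<forall>z\<in>Z. ip_SY T \<Omega> (mtf B - p') z = 0)"
    thus "p' = p0" by (rule uniq)
  qed
  have mini: "fip q s (\<lambda>a b. Psi B $$ (a,b) - Psi (transpose_mat W * C0 * W') $$ (a,b)) (\<lambda>a b. Psi B $$ (a,b) - Psi (transpose_mat W * C0 * W') $$ (a,b))
     \<le> fip q s (\<lambda>a b. Psi B $$ (a,b) - Psi (transpose_mat W * C * W') $$ (a,b)) (\<lambda>a b. Psi B $$ (a,b) - Psi (transpose_mat W * C * W') $$ (a,b))"
    if C: "C \<in> carrier_mat n m" for C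
  proof -
    define R where "R = (\<lambda>a b. Psi B $$ (a,b) - (P1 * C0 * P2) $$ (a,b))"
    define E where "E = (\<lambda>a b. (P1 * (C0 - C) * P2) $$ (a,b))"
    have D: "C0 - C \<in> carrier_mat n m" using C by (rule minus_carrier_mat)
    have RE: "fip q s R E = 0" unfolding R_def E_def using orth D by blast
    have "fip q s (\<lambda>a b. Psi B $$ (a,b) - Psi (transpose_mat W * C * W') $$ (a,b)) (\<lambda>a b. Psi B $$ (a,b) - Psi (transpose_mat W * C * W') $$ (a,b))
       = fip q s (\<lambda>a b. R a b + E a b) (\<lambda>a b. R a b + E a b)"
      by (intro fip_cong) (auto simp: R_def E_def PsiC[OF C] mult3_minus[OF P1 C0 C P2])
    also have "\<dots> = fip q s R R + 2 * fip q s R E + fip q s E E"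
      by (simp add: fip_add1 fip_add2 fip_comm[of q s E R])
    finally have "fip q s (\<lambda>a b. Psi B $$ (a,b) - Psi (transpose_mat W * C * W') $$ (a,b)) (\<lambda>a b. Psi B $$ (a,b) - Psi (transpose_mat W * C * W') $$ (a,b))
       = fip q s R R + fip q s E E" using RE by simp
    moreover have "fip q s (\<lambda>a b. Psi B $$ (a,b) - Psi (transpose_mat W * C0 * W') $$ (a,b)) (\<lambda>a b. Psi B $$ (a,b) - Psi (transpose_mat W * C0 * W') $$ (a,b)) = fip q s R R"
      unfolding R_def PsiC[OF C0] ..
    ultimately show ?thesis using fip_self_nonneg[of q s E] by simp
  qed
  show ?thesis using C0 proj mini unfolding Z_def p0_def by blast
qed

end

lemma wit_time:
  fixes P K V :: "real mat" and kk uu :: "nat \<Rightarrow> real"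
  assumes P: "P \<in> carrier_mat q n" and K: "K \<in> carrier_mat n s" and V: "V \<in> carrier_mat s s" and sh: "1 \<le> sh"
  shows "\<exists>C\<in>carrier_mat n sh. \<forall>a<q. \<forall>b<s.
     (P * C * transpose_mat (mat s sh (\<lambda>(j,k). if k = 0 then uu j else V $$ (j,k-1)))) $$ (a,b)
     = (P * K) $$ (a,b) - (mat q s (\<lambda>(a,b). (P * K) $$ (a,b) - (\<Sum>i<n. P $$ (a,i) * kk i) * uu b)
        - mat q s (\<lambda>(a,b). (P * K) $$ (a,b) - (\<Sum>i<n. P $$ (a,i) * kk i) * uu b)
          * (mat s (sh-1) (\<lambda>(i,j). V $$ (i,j)) * transpose_mat (mat s (sh-1) (\<lambda>(i,j). V $$ (i,j))))) $$ (a,b)"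
proof -
  define Ush where "Ush = mat s sh (\<lambda>(j,k). if k = 0 then uu j else V $$ (j,k-1))"
  define Vr where "Vr = mat s (sh-1) (\<lambda>(i,j). V $$ (i,j))"
  define Ao where "Ao = mat q s (\<lambda>(a,b). (P * K) $$ (a,b) - (\<Sum>i<n. P $$ (a,i) * kk i) * uu b)"
  define Ko where "Ko = mat n s (\<lambda>(i,b). K $$ (i,b) - kk i * uu b)"
  define VV where "VV = Vr * transpose_mat Vr"
  have Ushc: "Ush \<in> carrier_mat s sh" unfolding Ush_def by simp
  have Vrc: "Vr \<in> carrier_mat s (sh-1)" unfolding Vr_def by simp
  have Aoc: "Ao \<in> carrier_mat q s" unfolding Ao_def by simp
  have Koc: "Ko \<in> carrier_mat n s" unfolding Ko_def by simp
  have VVc: "VV \<in> carrier_mat s s" unfolding VV_def using Vrc by simp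
  have AoPKo: "Ao = P * Ko"
  proof (rule eq_matI)
    fix a b assume ab: "a < dim_row (P * Ko)" "b < dim_col (P * Ko)"
    hence ab': "a < q" "b < s" using P Koc by auto
    have "(P * Ko) $$ (a,b) = (\<Sum>i<n. P $$ (a,i) * Ko $$ (i,b))" using P Koc ab' by (intro mult_entry) auto
    also have "\<dots> = (\<Sum>i<n. P $$ (a,i) * K $$ (i,b)) - (\<Sum>i<n. P $$ (a,i) * kk i) * uu b"
      unfolding Ko_def using ab' by (simp add: right_diff_distrib sum_subtractf sum_distrib_left sum_distrib_right mult_ac)
    also have "(\<Sum>i<n. P $$ (a,i) * K $$ (i,b)) = (P * K) $$ (a,b)" using P K ab' by (intro mult_entry[symmetric]) auto
    finally show "Ao $$ (a,b) = (P * Ko) $$ (a,b)" unfolding Ao_def using ab' by simp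
  qed (use P Koc Aoc in auto)
  define C where "C = mat n sh (\<lambda>(i,m). if m = 0 then kk i else (Ko * Vr) $$ (i,m-1))"
  have Cc: "C \<in> carrier_mat n sh" unfolding C_def by simp
  have CU: "(C * transpose_mat Ush) $$ (i,b) = kk i * uu b + (Ko * VV) $$ (i,b)" if ib: "i < n" "b < s" for i b
  proof -
    obtain r where r: "sh = Suc r" using sh by (cases sh) auto
    have "(C * transpose_mat Ush) $$ (i,b) = (\<Sum>m<sh. C $$ (i,m) * transpose_mat Ush $$ (m,b))"
      using Cc Ushc ib by (intro mult_entry) auto
    also have "\<dots> = (\<Sum>m<Suc r. C $$ (i,m) * transpose_mat Ush $$ (m,b))" unfolding r ..
    also have "\<dots> = C $$ (i,0) * transpose_mat Ush $$ (0,b) + (\<Sum>m<r. C $$ (i,Suc m) * transpose_mat Ush $$ (Suc m,b))"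
      by (rule sum.lessThan_Suc_shift)
    also have "\<dots> = kk i * uu b + (\<Sum>m<r. (Ko * Vr) $$ (i,m) * transpose_mat Vr $$ (m,b))"
      using ib r by (simp add: C_def Ush_def Vr_def)
    also have "(\<Sum>m<r. (Ko * Vr) $$ (i,m) * transpose_mat Vr $$ (m,b)) = (Ko * Vr * transpose_mat Vr) $$ (i,b)"
      using Koc Vrc ib r by (intro mult_entry[symmetric]) auto
    also have "Ko * Vr * transpose_mat Vr = Ko * VV" unfolding VV_def using Koc Vrc by (intro assoc_mult_mat) auto
    finally show ?thesis .
  qed
  show ?thesis unfolding Ush_def[symmetric] Vr_def[symmetric] Ao_def[symmetric] VV_def[symmetric]
  proof (intro bexI[OF _ Cc] allI impI)
    fix a b assume ab: "a < q" "b < s"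
    have e: "P * C * transpose_mat Ush = P * (C * transpose_mat Ush)" using P Cc Ushc by (intro assoc_mult_mat) auto
    have "(P * C * transpose_mat Ush) $$ (a,b) = (\<Sum>i<n. P $$ (a,i) * (C * transpose_mat Ush) $$ (i,b))"
      unfolding e by (rule mult_entry[of P q n _ s]) (use P Cc Ushc ab in auto)
    also have "\<dots> = (\<Sum>i<n. P $$ (a,i) * kk i) * uu b + (\<Sum>i<n. P $$ (a,i) * (Ko * VV) $$ (i,b))"
      using ab by (simp add: CU sum.distrib sum_distrib_left sum_distrib_right algebra_simps)
    also have "(\<Sum>i<n. P $$ (a,i) * (Ko * VV) $$ (i,b)) = (P * (Ko * VV)) $$ (a,b)"
      using P Koc VVc ab by (intro mult_entry[symmetric]) auto
    also have "P * (Ko * VV) = Ao * VV" unfolding AoPKo using P Koc VVc by (intro assoc_mult_mat[symmetric]) auto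
    also have "(\<Sum>i<n. P $$ (a,i) * kk i) * uu b + (Ao * VV) $$ (a,b) = (P * K) $$ (a,b) - (Ao - Ao * VV) $$ (a,b)"
      using ab Aoc VVc by (simp add: Ao_def)
    finally show "(P * C * transpose_mat Ush) $$ (a,b) = (P * K) $$ (a,b) - (Ao - Ao * VV) $$ (a,b)" .
  qed
qed

lemma sum_zero_first: "0 < (s::nat) \<Longrightarrow> (\<Sum>j<s. if j = 0 then 0 else f j) = (\<Sum>j<s. f j) - (f 0 :: real)"
proof -
  assume s: "0 < s"
  have "(\<Sum>j<s. f j) = (\<Sum>j<s. (if j = 0 then f 0 else 0) + (if j = 0 then 0 else f j))"
    by (intro sum.cong) auto
  also have "\<dots> = (\<Sum>j<s. if j = 0 then f 0 else 0) + (\<Sum>j<s. if j = 0 then 0 else f j)"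
    by (rule sum.distrib)
  also have "(\<Sum>j<s. if j = 0 then f 0 else 0) = f 0" using s by (simp add: sum.delta)
  finally show ?thesis by simp
qed

lemma zfc_link:
  fixes LY X' LS P K :: "real mat" and kv :: "nat \<Rightarrow> real"
  assumes LY: "LY \<in> carrier_mat q q" and X': "X' \<in> carrier_mat q s" and LS: "LS \<in> carrier_mat s s" and s: "0 < s"
    and PK: "P * K = transpose_mat LY * X' * LS"
    and Pk: "\<And>a. a < q \<Longrightarrow> (\<Sum>i<n. P $$ (a,i) * kv i) = (transpose_mat LY * X') $$ (a,0)"
  shows "transpose_mat LY * zero_first_col X' * LS =
     mat q s (\<lambda>(a,b). (P * K) $$ (a,b) - (\<Sum>i<n. P $$ (a,i) * kv i) * transpose_mat LS $$ (b,0))"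
proof (rule eq_matI)
  have Z: "zero_first_col X' \<in> carrier_mat q s" using X' unfolding zero_first_col_def by auto
  fix a b assume "a < dim_row (mat q s (\<lambda>(a,b). (P * K) $$ (a,b) - (\<Sum>i<n. P $$ (a,i) * kv i) * transpose_mat LS $$ (b,0)))"
    "b < dim_col (mat q s (\<lambda>(a,b). (P * K) $$ (a,b) - (\<Sum>i<n. P $$ (a,i) * kv i) * transpose_mat LS $$ (b,0)))"
  hence ab: "a < q" "b < s" by auto
  have "(transpose_mat LY * zero_first_col X' * LS) $$ (a,b) = (\<Sum>i<q. \<Sum>j<s. transpose_mat LY $$ (a,i) * zero_first_col X' $$ (i,j) * LS $$ (j,b))"
    by (rule mult3_entry) (use LY Z LS ab in auto)
  also have "\<dots> = (\<Sum>i<q. (\<Sum>j<s. transpose_mat LY $$ (a,i) * X' $$ (i,j) * LS $$ (j,b)) - transpose_mat LY $$ (a,i) * X' $$ (i,0) * LS $$ (0,b))"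
  proof (intro sum.cong refl)
    fix i assume i: "i \<in> {..<q}"
    have "(\<Sum>j<s. transpose_mat LY $$ (a,i) * zero_first_col X' $$ (i,j) * LS $$ (j,b)) =
      (\<Sum>j<s. if j = 0 then 0 else transpose_mat LY $$ (a,i) * X' $$ (i,j) * LS $$ (j,b))"
      using i X' by (intro sum.cong refl) (auto simp: zero_first_col_def)
    also have "\<dots> = (\<Sum>j<s. transpose_mat LY $$ (a,i) * X' $$ (i,j) * LS $$ (j,b)) - transpose_mat LY $$ (a,i) * X' $$ (i,0) * LS $$ (0,b)"
      using sum_zero_first[OF s, of "\<lambda>j. transpose_mat LY $$ (a,i) * X' $$ (i,j) * LS $$ (j,b)"] by simp
    finally show "(\<Sum>j<s. transpose_mat LY $$ (a,i) * zero_first_col X' $$ (i,j) * LS $$ (j,b)) =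
      (\<Sum>j<s. transpose_mat LY $$ (a,i) * X' $$ (i,j) * LS $$ (j,b)) - transpose_mat LY $$ (a,i) * X' $$ (i,0) * LS $$ (0,b)" .
  qed
  also have "\<dots> = (\<Sum>i<q. \<Sum>j<s. transpose_mat LY $$ (a,i) * X' $$ (i,j) * LS $$ (j,b)) - (\<Sum>i<q. transpose_mat LY $$ (a,i) * X' $$ (i,0)) * LS $$ (0,b)"
    by (simp add: sum_subtractf sum_distrib_right)
  also have "(\<Sum>i<q. \<Sum>j<s. transpose_mat LY $$ (a,i) * X' $$ (i,j) * LS $$ (j,b)) = (transpose_mat LY * X' * LS) $$ (a,b)"
    by (rule mult3_entry[symmetric]) (use LY X' LS ab in auto)
  also have "(\<Sum>i<q. transpose_mat LY $$ (a,i) * X' $$ (i,0)) = (transpose_mat LY * X') $$ (a,0)"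
    by (rule mult_entry[symmetric]) (use LY X' LS ab s in auto)
  finally show "(transpose_mat LY * zero_first_col X' * LS) $$ (a,b) =
     mat q s (\<lambda>(a,b). (P * K) $$ (a,b) - (\<Sum>i<n. P $$ (a,i) * kv i) * transpose_mat LS $$ (b,0)) $$ (a,b)"
    using ab LS Pk[OF ab(1)] s unfolding PK by simp
qed (use LY LS in \<open>auto simp: zero_first_col_def\<close>)

lemma fip_L2: "sqrt (fip q s F F) = L2_set (\<lambda>(a,b). F a b) ({..<q} \<times> {..<s})"
  unfolding fip_def L2_set_def by (auto simp: sum.cartesian_product power2_eq_square intro!: sum.cong arg_cong[where f=sqrt])

lemma fip_tri:
  "sqrt (fip q s (\<lambda>a b. f a b - h a b) (\<lambda>a b. f a b - h a b)) \<le>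
   sqrt (fip q s (\<lambda>a b. f a b - g a b) (\<lambda>a b. f a b - g a b)) + sqrt (fip q s (\<lambda>a b. g a b - h a b) (\<lambda>a b. g a b - h a b))"
proof -
  have "L2_set (\<lambda>(a,b). f a b - h a b) ({..<q} \<times> {..<s}) = L2_set (\<lambda>i. (\<lambda>(a,b). f a b - g a b) i + (\<lambda>(a,b). g a b - h a b) i) ({..<q} \<times> {..<s})"
    by (intro L2_set_cong) auto
  also have "\<dots> \<le> L2_set (\<lambda>(a,b). f a b - g a b) ({..<q} \<times> {..<s}) + L2_set (\<lambda>(a,b). g a b - h a b) ({..<q} \<times> {..<s})"
    by (rule L2_set_triangle_ineq)
  finally show ?thesis unfolding fip_L2 .
qed

context setting
begin

lemma PsiW:
  assumes W: "W \<in> carrier_mat n q" and W': "W' \<in> carrier_mat m s" and C: "C \<in> carrier_mat n m"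
  shows "Psi (transpose_mat W * C * W') = (transpose_mat LY * transpose_mat W) * C * (W' * LS)"
  using assoc5[of "transpose_mat LY" q q "transpose_mat W" n C m W' s LS s] LYc W W' LSc C by simp

lemma LW:
  assumes Vq: "Vq \<in> carrier_mat q n"
  shows "transpose_mat LY * transpose_mat (transpose_mat Vq * minv LY) = Vq"
proof -
  have "transpose_mat (transpose_mat Vq * minv LY) = transpose_mat (minv LY) * Vq"
    using Vq Li by (simp add: transpose_mult[of "transpose_mat Vq" n q "minv LY" q])
  moreover have "transpose_mat LY * (transpose_mat (minv LY) * Vq) = (transpose_mat LY * transpose_mat (minv LY)) * Vq"
    using LYc Li Vq by (intro assoc_mult_mat[symmetric]) auto
  moreover have "transpose_mat LY * transpose_mat (minv LY) = 1\<^sub>m q"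
  proof -
    have "transpose_mat (minv LY * LY) = transpose_mat LY * transpose_mat (minv LY)"
      using LYc Li by (intro transpose_mult) auto
    thus ?thesis using Li by simp
  qed
  ultimately show ?thesis using Vq by simp
qed

lemma RW:
  assumes U: "U \<in> carrier_mat s m"
  shows "(transpose_mat U * minv LS) * LS = transpose_mat U"
proof -
  have "(transpose_mat U * minv LS) * LS = transpose_mat U * (minv LS * LS)"
    using U Si LSc by (intro assoc_mult_mat) auto
  thus ?thesis using Si U by simp
qed

end

context setting
begin

lemma case1:
  assumes qh: "qh \<le> q" and sh: "2 \<le> sh" and shs: "sh \<le> s" and Xc: "X \<in> carrier_mat q s"
  shows "\<forall>U1 D1 V1. is_svd (transpose_mat LY * X * LS) U1 D1 V1 \<longrightarrow>
       (let \<nu>h = red_space_basis LY q \<nu> qh U1;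
            x1 = orth_proj (ip_SY T \<Omega>) (prod_span qh \<nu>h s \<psi>) (mtf X);
            X1 = coeff_mat q s \<nu> \<psi> x1
        in \<forall>U2 D2 V2. is_svd (transpose_mat LY * zero_first_col X1 * LS) U2 D2 V2 \<longrightarrow>
          (let \<psi>h = red_time_basis LS s \<psi> sh V2;
               Px = orth_proj (ip_SY T \<Omega>) (prod_span qh \<nu>h sh \<psi>h) x1
           in norm_SY T \<Omega> (mtf X - Px)
                \<le> sqrt (\<Sum>i\<in>{qh..<q}. (sing_val D1 i)\<^sup>2) + sqrt (\<Sum>j\<in>{sh-1..<s}. (sing_val D2 j)\<^sup>2)))"
proof (intro allI impI)
  fix U1 D1 V1 assume svd1: "is_svd (transpose_mat LY * X * LS) U1 D1 V1"
  have s0: "0 < s" using sh shs by linarith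
  have PXc: "Psi X \<in> carrier_mat q s" using LYc Xc LSc by simp
  define Vq where "Vq = mat q qh (\<lambda>(i,k). U1 $$ (i,k))"
  define W where "W = transpose_mat Vq * minv LY"
  have Vqc: "Vq \<in> carrier_mat q qh" unfolding Vq_def by simp
  have Wc: "W \<in> carrier_mat qh q" unfolding W_def using Vqc Li by simp
  have LWW: "transpose_mat LY * transpose_mat W = Vq" unfolding W_def by (rule LW[OF Vqc])
  have nuh: "red_space_basis LY q \<nu> qh U1 = (\<lambda>k \<xi>. \<Sum>i<q. W $$ (k,i) * \<nu> i \<xi>)"
    unfolding red_space_basis_def Let_def W_def Vq_def ..
  have Z1: "prod_span qh (red_space_basis LY q \<nu> qh U1) s \<psi> = {mtf (transpose_mat W * C * 1\<^sub>m s) | C. C \<in> carrier_mat qh s}"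
  proof -
    have "prod_span qh (red_space_basis LY q \<nu> qh U1) s \<psi> =
          prod_span qh (\<lambda>k \<xi>. \<Sum>i<q. W $$ (k,i) * \<nu> i \<xi>) s (\<lambda>l t. \<Sum>j<s. (1\<^sub>m s :: real mat) $$ (l,j) * \<psi> j t)"
      unfolding nuh by (rule prod_span_cong, rule refl, rule one_comb[symmetric], assumption)
    also have "\<dots> = {mtf (transpose_mat W * C * 1\<^sub>m s) | C. C \<in> carrier_mat qh s}"
      by (rule prod_span_char[OF Wc]) simp
    finally show ?thesis .
  qed
  obtain C0 where C0: "C0 \<in> carrier_mat qh s"
    and x1: "orth_proj (ip_SY T \<Omega>) {mtf (transpose_mat W * C * 1\<^sub>m s) | C. C \<in> carrier_mat qh s} (mtf X) = mtf (transpose_mat W * C0 * 1\<^sub>m s)"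
    and min1: "\<forall>C \<in> carrier_mat qh s.
       fip q s (\<lambda>a b. Psi X $$ (a,b) - Psi (transpose_mat W * C0 * 1\<^sub>m s) $$ (a,b)) (\<lambda>a b. Psi X $$ (a,b) - Psi (transpose_mat W * C0 * 1\<^sub>m s) $$ (a,b))
     \<le> fip q s (\<lambda>a b. Psi X $$ (a,b) - Psi (transpose_mat W * C * 1\<^sub>m s) $$ (a,b)) (\<lambda>a b. Psi X $$ (a,b) - Psi (transpose_mat W * C * 1\<^sub>m s) $$ (a,b))"
    using transfer[OF Wc one_carrier_mat Xc] by blast
  define X1 where "X1 = transpose_mat W * C0 * 1\<^sub>m s"
  have X1c: "X1 \<in> carrier_mat q s" unfolding X1_def using Wc C0 by simp
  have cX1: "coeff_mat q s \<nu> \<psi> (mtf X1) = X1" by (rule coeff_mtf[OF X1c])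
  have PsiW1: "Psi (transpose_mat W * C * 1\<^sub>m s) = Vq * (C * LS)" if C: "C \<in> carrier_mat qh s" for C
  proof -
    have "Psi (transpose_mat W * C * 1\<^sub>m s) = Vq * C * (1\<^sub>m s * LS)"
      unfolding PsiW[OF Wc one_carrier_mat C] LWW ..
    also have "\<dots> = Vq * (C * LS)" using Vqc C LSc by (simp add: assoc_mult_mat[of Vq q qh C s LS s])
    finally show ?thesis .
  qed
  have PsiX1: "Psi X1 = Vq * (C0 * LS)" unfolding X1_def by (rule PsiW1[OF C0])
  have LYX1: "(transpose_mat LY * X1) $$ (a,0) = (\<Sum>i<qh. Vq $$ (a,i) * C0 $$ (i,0))" if a: "a < q" for a
  proof -
    have "transpose_mat LY * X1 = transpose_mat LY * (transpose_mat W * C0)" unfolding X1_def using Wc C0 by simp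
    also have "\<dots> = Vq * C0" unfolding LWW[symmetric] using LYc Wc C0 by (intro assoc_mult_mat[symmetric]) auto
    finally have e: "transpose_mat LY * X1 = Vq * C0" .
    show ?thesis unfolding e by (rule mult_entry) (use a s0 Vqc C0 in auto)
  qed
  have part1: "fip q s (\<lambda>a b. Psi X $$ (a,b) - Psi X1 $$ (a,b)) (\<lambda>a b. Psi X $$ (a,b) - Psi X1 $$ (a,b))
     \<le> (\<Sum>i\<in>{qh..<q}. (sing_val D1 i)\<^sup>2)"
  proof -
    define Cw where "Cw = transpose_mat Vq * Psi X * minv LS"
    have Cwc: "Cw \<in> carrier_mat qh s" unfolding Cw_def using Vqc PXc Si by simp
    have PCw: "Psi (transpose_mat W * Cw * 1\<^sub>m s) = Vq * (transpose_mat Vq * Psi X)"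
    proof -
      have "Cw * LS = transpose_mat Vq * Psi X * (minv LS * LS)"
        unfolding Cw_def using Vqc PXc Si LSc by (intro assoc_mult_mat[of _ qh s _ s _ s]) auto
      also have "\<dots> = transpose_mat Vq * Psi X" unfolding Si(3) using Vqc PXc by (intro right_mult_one_mat[of _ qh]) auto
      finally have e: "Cw * LS = transpose_mat Vq * Psi X" .
      show ?thesis unfolding PsiW1[OF Cwc] e ..
    qed
    have "fip q s (\<lambda>a b. Psi X $$ (a,b) - Psi X1 $$ (a,b)) (\<lambda>a b. Psi X $$ (a,b) - Psi X1 $$ (a,b))
       \<le> fip q s (\<lambda>a b. Psi X $$ (a,b) - (Vq * (transpose_mat Vq * Psi X)) $$ (a,b)) (\<lambda>a b. Psi X $$ (a,b) - (Vq * (transpose_mat Vq * Psi X)) $$ (a,b))"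
      using min1[rule_format, OF Cwc] unfolding PCw X1_def .
    also have "\<dots> = (\<Sum>i\<in>{qh..<q}. (sing_val D1 i)\<^sup>2)"
      unfolding Vq_def by (rule svd_left[OF svd1 PXc qh])
    finally show ?thesis .
  qed
  show "let \<nu>h = red_space_basis LY q \<nu> qh U1;
            x1 = orth_proj (ip_SY T \<Omega>) (prod_span qh \<nu>h s \<psi>) (mtf X);
            X1 = coeff_mat q s \<nu> \<psi> x1
        in \<forall>U2 D2 V2. is_svd (transpose_mat LY * zero_first_col X1 * LS) U2 D2 V2 \<longrightarrow>
          (let \<psi>h = red_time_basis LS s \<psi> sh V2;
               Px = orth_proj (ip_SY T \<Omega>) (prod_span qh \<nu>h sh \<psi>h) x1
           in norm_SY T \<Omega> (mtf X - Px)
                \<le> sqrt (\<Sum>i\<in>{qh..<q}. (sing_val D1 i)\<^sup>2) + sqrt (\<Sum>j\<in>{sh-1..<s}. (sing_val D2 j)\<^sup>2))"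
    unfolding Let_def Z1 x1 X1_def[symmetric] cX1 
  proof (intro allI impI)
    fix U2 D2 V2 assume svd2: "is_svd (transpose_mat LY * zero_first_col X1 * LS) U2 D2 V2"
    show "norm_SY T \<Omega> (mtf X - orth_proj (ip_SY T \<Omega>) (prod_span qh (red_space_basis LY q \<nu> qh U1) sh (red_time_basis LS s \<psi> sh V2)) (mtf X1))
       \<le> sqrt (\<Sum>i\<in>{qh..<q}. (sing_val D1 i)\<^sup>2) + sqrt (\<Sum>j\<in>{sh-1..<s}. (sing_val D2 j)\<^sup>2)"
    proof -
      define kv where "kv = (\<lambda>i. C0 $$ (i,0))"
      define Ao where "Ao = mat q s (\<lambda>(a,b). (Vq * (C0 * LS)) $$ (a,b) - (\<Sum>i<qh. Vq $$ (a,i) * kv i) * transpose_mat LS $$ (b,0))"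
      define Vr where "Vr = mat s (sh-1) (\<lambda>(i,j). V2 $$ (i,j))"
      define Ush where "Ush = mat s sh (\<lambda>(j,k). if k = 0 then transpose_mat LS $$ (j,0) else V2 $$ (j,k-1))"
      define W2 where "W2 = transpose_mat Ush * minv LS"
      have Ushc: "Ush \<in> carrier_mat s sh" unfolding Ush_def by simp
      have W2c: "W2 \<in> carrier_mat sh s" unfolding W2_def using Ushc Si by simp
      have Aoc: "Ao \<in> carrier_mat q s" unfolding Ao_def by simp
      have sh1: "1 \<le> sh" using sh by simp
      have C0LS: "C0 * LS \<in> carrier_mat qh s" using C0 LSc by simp
      have AoE: "transpose_mat LY * zero_first_col X1 * LS = Ao"
        unfolding Ao_def kv_def
        by (rule zfc_link[OF LYc X1c LSc s0 PsiX1[symmetric]]) (simp add: LYX1)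
      have svd2': "is_svd Ao U2 D2 V2" using svd2 unfolding AoE .
      have V2c: "V2 \<in> carrier_mat s s" using svd2' Aoc unfolding is_svd_def by auto
      have psih: "red_time_basis LS s \<psi> sh V2 = (\<lambda>k t. \<Sum>j<s. W2 $$ (k,j) * \<psi> j t)"
        unfolding red_time_basis_def Let_def W2_def Ush_def ..
      have Z2: "prod_span qh (red_space_basis LY q \<nu> qh U1) sh (red_time_basis LS s \<psi> sh V2)
          = {mtf (transpose_mat W * C * W2) | C. C \<in> carrier_mat qh sh}"
        unfolding nuh psih by (rule prod_span_char[OF Wc W2c])
      obtain C0' where C0': "C0' \<in> carrier_mat qh sh"
        and Px: "orth_proj (ip_SY T \<Omega>) {mtf (transpose_mat W * C * W2) | C. C \<in> carrier_mat qh sh} (mtf X1) = mtf (transpose_mat W * C0' * W2)"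
        and min2: "\<forall>C \<in> carrier_mat qh sh.
         fip q s (\<lambda>a b. Psi X1 $$ (a,b) - Psi (transpose_mat W * C0' * W2) $$ (a,b)) (\<lambda>a b. Psi X1 $$ (a,b) - Psi (transpose_mat W * C0' * W2) $$ (a,b))
       \<le> fip q s (\<lambda>a b. Psi X1 $$ (a,b) - Psi (transpose_mat W * C * W2) $$ (a,b)) (\<lambda>a b. Psi X1 $$ (a,b) - Psi (transpose_mat W * C * W2) $$ (a,b))"
        using transfer[OF Wc W2c X1c] by blast
      define M where "M = transpose_mat W * C0' * W2"
      have Mc: "M \<in> carrier_mat q s" unfolding M_def using Wc C0' W2c by simp
      have PsiW2: "Psi (transpose_mat W * C * W2) = Vq * C * transpose_mat Ush" if C: "C \<in> carrier_mat qh sh" for C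
        unfolding PsiW[OF Wc W2c C] LWW unfolding W2_def RW[OF Ushc] ..
      obtain Cw where Cw: "Cw \<in> carrier_mat qh sh" and wit: "\<forall>a<q. \<forall>b<s.
         (Vq * Cw * transpose_mat Ush) $$ (a,b) = (Vq * (C0 * LS)) $$ (a,b) - (Ao - Ao * (Vr * transpose_mat Vr)) $$ (a,b)"
        using wit_time[where kk=kv and uu="\<lambda>j. transpose_mat LS $$ (j,0)" and sh=sh, OF Vqc C0LS V2c sh1]
        unfolding Ao_def Vr_def Ush_def by blast
      have part2: "fip q s (\<lambda>a b. Psi X1 $$ (a,b) - Psi M $$ (a,b)) (\<lambda>a b. Psi X1 $$ (a,b) - Psi M $$ (a,b))
         \<le> (\<Sum>j\<in>{sh-1..<s}. (sing_val D2 j)\<^sup>2)"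
      proof -
        have "fip q s (\<lambda>a b. Psi X1 $$ (a,b) - Psi M $$ (a,b)) (\<lambda>a b. Psi X1 $$ (a,b) - Psi M $$ (a,b))
          \<le> fip q s (\<lambda>a b. Psi X1 $$ (a,b) - (Vq * Cw * transpose_mat Ush) $$ (a,b)) (\<lambda>a b. Psi X1 $$ (a,b) - (Vq * Cw * transpose_mat Ush) $$ (a,b))"
          using min2[rule_format, OF Cw] unfolding PsiW2[OF Cw] M_def .
        also have "\<dots> = fip q s (\<lambda>a b. Ao $$ (a,b) - (Ao * (Vr * transpose_mat Vr)) $$ (a,b)) (\<lambda>a b. Ao $$ (a,b) - (Ao * (Vr * transpose_mat Vr)) $$ (a,b))"
        proof -
          have Vrc: "Vr \<in> carrier_mat s (sh-1)" unfolding Vr_def by simp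
          have AVc: "Ao * (Vr * transpose_mat Vr) \<in> carrier_mat q s" using Aoc Vrc by simp
          have ent: "Psi X1 $$ (a,b) - (Vq * Cw * transpose_mat Ush) $$ (a,b) = Ao $$ (a,b) - (Ao * (Vr * transpose_mat Vr)) $$ (a,b)"
            if ab: "a < q" "b < s" for a b
          proof -
            have "(Ao - Ao * (Vr * transpose_mat Vr)) $$ (a,b) = Ao $$ (a,b) - (Ao * (Vr * transpose_mat Vr)) $$ (a,b)"
              using AVc ab by (intro index_minus_mat) auto
            thus ?thesis using wit ab unfolding PsiX1 by simp
          qed
          show ?thesis by (rule fip_cong[OF ent ent])
        qed
        also have "\<dots> = (\<Sum>j\<in>{sh-1..<s}. (sing_val D2 j)\<^sup>2)"
          unfolding Vr_def using shs by (intro svd_right[OF svd2' Aoc]) auto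
        finally show ?thesis .
      qed
      have "norm_SY T \<Omega> (mtf X - mtf M) = sqrt (fip q s (\<lambda>a b. Psi X $$ (a,b) - Psi M $$ (a,b)) (\<lambda>a b. Psi X $$ (a,b) - Psi M $$ (a,b)))"
        by (rule norm_mtf[OF Xc Mc])
      also have "\<dots> \<le> sqrt (fip q s (\<lambda>a b. Psi X $$ (a,b) - Psi X1 $$ (a,b)) (\<lambda>a b. Psi X $$ (a,b) - Psi X1 $$ (a,b)))
          + sqrt (fip q s (\<lambda>a b. Psi X1 $$ (a,b) - Psi M $$ (a,b)) (\<lambda>a b. Psi X1 $$ (a,b) - Psi M $$ (a,b)))"
        by (rule fip_tri)
      also have "\<dots> \<le> sqrt (\<Sum>i\<in>{qh..<q}. (sing_val D1 i)\<^sup>2) + sqrt (\<Sum>j\<in>{sh-1..<s}. (sing_val D2 j)\<^sup>2)"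
        using part1 part2 by (intro add_mono real_sqrt_le_mono)
      finally show ?thesis unfolding Z2 Px M_def .
    qed
  qed
qed

lemma case2:
  assumes qh: "qh \<le> q" and sh: "2 \<le> sh" and shs: "sh \<le> s" and Xc: "X \<in> carrier_mat q s"
  shows "\<forall>U3 D3 V3. is_svd (transpose_mat LY * zero_first_col X * LS) U3 D3 V3 \<longrightarrow>
       (let \<psi>h = red_time_basis LS s \<psi> sh V3;
            x2 = orth_proj (ip_SY T \<Omega>) (prod_span q \<nu> sh \<psi>h) (mtf X);
            X2 = coeff_mat q s \<nu> \<psi> x2
        in \<forall>U4 D4 V4. is_svd (transpose_mat LY * X2 * LS) U4 D4 V4 \<longrightarrow>
          (let \<nu>h = red_space_basis LY q \<nu> qh U4;
               Px = orth_proj (ip_SY T \<Omega>) (prod_span qh \<nu>h sh \<psi>h) x2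
           in norm_SY T \<Omega> (mtf X - Px)
                \<le> sqrt (\<Sum>j\<in>{sh-1..<s}. (sing_val D3 j)\<^sup>2) + sqrt (\<Sum>i\<in>{qh..<q}. (sing_val D4 i)\<^sup>2)))"
proof (intro allI impI)
  fix U3 D3 V3 assume svd3: "is_svd (transpose_mat LY * zero_first_col X * LS) U3 D3 V3"
  have s0: "0 < s" using sh shs by linarith
  have sh1: "1 \<le> sh" using sh by simp
  have PXc: "Psi X \<in> carrier_mat q s" using LYc Xc LSc by simp
  have LYtc: "transpose_mat LY \<in> carrier_mat q q" using LYc by simp
  have XLSc: "X * LS \<in> carrier_mat q s" using Xc LSc by simp
  have PsiX: "Psi X = transpose_mat LY * (X * LS)" using LYtc Xc LSc by (intro assoc_mult_mat) auto
  define kv where "kv = (\<lambda>i. X $$ (i,0))"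
  define Ao where "Ao = mat q s (\<lambda>(a,b). (transpose_mat LY * (X * LS)) $$ (a,b) - (\<Sum>i<q. transpose_mat LY $$ (a,i) * kv i) * transpose_mat LS $$ (b,0))"
  define Vr where "Vr = mat s (sh-1) (\<lambda>(i,j). V3 $$ (i,j))"
  define Ush where "Ush = mat s sh (\<lambda>(j,k). if k = 0 then transpose_mat LS $$ (j,0) else V3 $$ (j,k-1))"
  define W2 where "W2 = transpose_mat Ush * minv LS"
  have Ushc: "Ush \<in> carrier_mat s sh" unfolding Ush_def by simp
  have W2c: "W2 \<in> carrier_mat sh s" unfolding W2_def using Ushc Si by simp
  have Aoc: "Ao \<in> carrier_mat q s" unfolding Ao_def by simp
  have Vrc: "Vr \<in> carrier_mat s (sh-1)" unfolding Vr_def by simp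
  have AoE: "transpose_mat LY * zero_first_col X * LS = Ao"
    unfolding Ao_def
  proof (rule zfc_link[OF LYc Xc LSc s0 PsiX[symmetric]])
    fix a assume a: "a < q"
    show "(\<Sum>i<q. transpose_mat LY $$ (a,i) * kv i) = (transpose_mat LY * X) $$ (a,0)"
      unfolding kv_def by (rule mult_entry[symmetric]) (use a LYtc Xc s0 in auto)
  qed
  have svd3': "is_svd Ao U3 D3 V3" using svd3 unfolding AoE .
  have V3c: "V3 \<in> carrier_mat s s" using svd3' Aoc unfolding is_svd_def by auto
  have psih: "red_time_basis LS s \<psi> sh V3 = (\<lambda>k t. \<Sum>j<s. W2 $$ (k,j) * \<psi> j t)"
    unfolding red_time_basis_def Let_def W2_def Ush_def ..
  have Z3: "prod_span q \<nu> sh (red_time_basis LS s \<psi> sh V3) = {mtf (transpose_mat (1\<^sub>m q) * C * W2) | C. C \<in> carrier_mat q sh}"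
  proof -
    have "prod_span q \<nu> sh (red_time_basis LS s \<psi> sh V3) =
          prod_span q (\<lambda>k \<xi>. \<Sum>i<q. (1\<^sub>m q :: real mat) $$ (k,i) * \<nu> i \<xi>) sh (\<lambda>k t. \<Sum>j<s. W2 $$ (k,j) * \<psi> j t)"
      unfolding psih by (rule prod_span_cong, rule one_comb[symmetric], assumption, rule refl)
    also have "\<dots> = {mtf (transpose_mat (1\<^sub>m q) * C * W2) | C. C \<in> carrier_mat q sh}"
      by (rule prod_span_char[OF one_carrier_mat W2c])
    finally show ?thesis .
  qed
  obtain C0 where C0: "C0 \<in> carrier_mat q sh"
    and x2: "orth_proj (ip_SY T \<Omega>) {mtf (transpose_mat (1\<^sub>m q) * C * W2) | C. C \<in> carrier_mat q sh} (mtf X) = mtf (transpose_mat (1\<^sub>m q) * C0 * W2)"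
    and min3: "\<forall>C \<in> carrier_mat q sh.
       fip q s (\<lambda>a b. Psi X $$ (a,b) - Psi (transpose_mat (1\<^sub>m q) * C0 * W2) $$ (a,b)) (\<lambda>a b. Psi X $$ (a,b) - Psi (transpose_mat (1\<^sub>m q) * C0 * W2) $$ (a,b))
     \<le> fip q s (\<lambda>a b. Psi X $$ (a,b) - Psi (transpose_mat (1\<^sub>m q) * C * W2) $$ (a,b)) (\<lambda>a b. Psi X $$ (a,b) - Psi (transpose_mat (1\<^sub>m q) * C * W2) $$ (a,b))"
    using transfer[OF one_carrier_mat W2c Xc] by blast
  define X2 where "X2 = transpose_mat (1\<^sub>m q) * C0 * W2"
  have X2c: "X2 \<in> carrier_mat q s" unfolding X2_def using C0 W2c by simp
  have cX2: "coeff_mat q s \<nu> \<psi> (mtf X2) = X2" by (rule coeff_mtf[OF X2c])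
  have PX2c: "Psi X2 \<in> carrier_mat q s" using LYc X2c LSc by simp
  have PsiW3: "Psi (transpose_mat (1\<^sub>m q) * C * W2) = transpose_mat LY * C * transpose_mat Ush" if C: "C \<in> carrier_mat q sh" for C
  proof -
    have "Psi (transpose_mat (1\<^sub>m q) * C * W2) = (transpose_mat LY * transpose_mat (1\<^sub>m q)) * C * (W2 * LS)"
      by (rule PsiW[OF one_carrier_mat W2c C])
    also have "transpose_mat LY * transpose_mat (1\<^sub>m q) = transpose_mat LY" using LYtc by simp
    also have "W2 * LS = transpose_mat Ush" unfolding W2_def by (rule RW[OF Ushc])
    finally show ?thesis .
  qed
  have PsiX2: "Psi X2 = transpose_mat LY * C0 * transpose_mat Ush" unfolding X2_def by (rule PsiW3[OF C0])
  have part1: "fip q s (\<lambda>a b. Psi X $$ (a,b) - Psi X2 $$ (a,b)) (\<lambda>a b. Psi X $$ (a,b) - Psi X2 $$ (a,b))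
     \<le> (\<Sum>j\<in>{sh-1..<s}. (sing_val D3 j)\<^sup>2)"
  proof -
    obtain Cw where Cw: "Cw \<in> carrier_mat q sh" and wit: "\<forall>a<q. \<forall>b<s.
         (transpose_mat LY * Cw * transpose_mat Ush) $$ (a,b) = (transpose_mat LY * (X * LS)) $$ (a,b) - (Ao - Ao * (Vr * transpose_mat Vr)) $$ (a,b)"
      using wit_time[where kk=kv and uu="\<lambda>j. transpose_mat LS $$ (j,0)" and sh=sh, OF LYtc XLSc V3c sh1]
      unfolding Ao_def Vr_def Ush_def by blast
    have "fip q s (\<lambda>a b. Psi X $$ (a,b) - Psi X2 $$ (a,b)) (\<lambda>a b. Psi X $$ (a,b) - Psi X2 $$ (a,b))
      \<le> fip q s (\<lambda>a b. Psi X $$ (a,b) - (transpose_mat LY * Cw * transpose_mat Ush) $$ (a,b)) (\<lambda>a b. Psi X $$ (a,b) - (transpose_mat LY * Cw * transpose_mat Ush) $$ (a,b))"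
      using min3[rule_format, OF Cw] unfolding PsiW3[OF Cw] X2_def .
    also have "\<dots> = fip q s (\<lambda>a b. Ao $$ (a,b) - (Ao * (Vr * transpose_mat Vr)) $$ (a,b)) (\<lambda>a b. Ao $$ (a,b) - (Ao * (Vr * transpose_mat Vr)) $$ (a,b))"
    proof -
      have AVc: "Ao * (Vr * transpose_mat Vr) \<in> carrier_mat q s" using Aoc Vrc by simp
      have ent: "Psi X $$ (a,b) - (transpose_mat LY * Cw * transpose_mat Ush) $$ (a,b) = Ao $$ (a,b) - (Ao * (Vr * transpose_mat Vr)) $$ (a,b)"
        if ab: "a < q" "b < s" for a b
      proof -
        have "(Ao - Ao * (Vr * transpose_mat Vr)) $$ (a,b) = Ao $$ (a,b) - (Ao * (Vr * transpose_mat Vr)) $$ (a,b)"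
          using AVc ab by (intro index_minus_mat) auto
        thus ?thesis using wit ab unfolding PsiX by simp
      qed
      show ?thesis by (rule fip_cong[OF ent ent])
    qed
    also have "\<dots> = (\<Sum>j\<in>{sh-1..<s}. (sing_val D3 j)\<^sup>2)"
      unfolding Vr_def using shs by (intro svd_right[OF svd3' Aoc]) auto
    finally show ?thesis .
  qed
  show "let \<psi>h = red_time_basis LS s \<psi> sh V3;
            x2 = orth_proj (ip_SY T \<Omega>) (prod_span q \<nu> sh \<psi>h) (mtf X);
            X2 = coeff_mat q s \<nu> \<psi> x2
        in \<forall>U4 D4 V4. is_svd (transpose_mat LY * X2 * LS) U4 D4 V4 \<longrightarrow>
          (let \<nu>h = red_space_basis LY q \<nu> qh U4;
               Px = orth_proj (ip_SY T \<Omega>) (prod_span qh \<nu>h sh \<psi>h) x2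
           in norm_SY T \<Omega> (mtf X - Px)
                \<le> sqrt (\<Sum>j\<in>{sh-1..<s}. (sing_val D3 j)\<^sup>2) + sqrt (\<Sum>i\<in>{qh..<q}. (sing_val D4 i)\<^sup>2))"
    unfolding Let_def Z3 x2 X2_def[symmetric] cX2
  proof (intro allI impI)
    fix U4 D4 V4 assume svd4: "is_svd (transpose_mat LY * X2 * LS) U4 D4 V4"
    define Vq where "Vq = mat q qh (\<lambda>(i,k). U4 $$ (i,k))"
    define W where "W = transpose_mat Vq * minv LY"
    have Vqc: "Vq \<in> carrier_mat q qh" unfolding Vq_def by simp
    have Wc: "W \<in> carrier_mat qh q" unfolding W_def using Vqc Li by simp
    have LWW: "transpose_mat LY * transpose_mat W = Vq" unfolding W_def by (rule LW[OF Vqc])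
    have nuh: "red_space_basis LY q \<nu> qh U4 = (\<lambda>k \<xi>. \<Sum>i<q. W $$ (k,i) * \<nu> i \<xi>)"
      unfolding red_space_basis_def Let_def W_def Vq_def ..
    have Z4: "prod_span qh (red_space_basis LY q \<nu> qh U4) sh (red_time_basis LS s \<psi> sh V3)
        = {mtf (transpose_mat W * C * W2) | C. C \<in> carrier_mat qh sh}"
      unfolding nuh psih by (rule prod_span_char[OF Wc W2c])
    obtain C0' where C0': "C0' \<in> carrier_mat qh sh"
      and Px: "orth_proj (ip_SY T \<Omega>) {mtf (transpose_mat W * C * W2) | C. C \<in> carrier_mat qh sh} (mtf X2) = mtf (transpose_mat W * C0' * W2)"
      and min4: "\<forall>C \<in> carrier_mat qh sh.
       fip q s (\<lambda>a b. Psi X2 $$ (a,b) - Psi (transpose_mat W * C0' * W2) $$ (a,b)) (\<lambda>a b. Psi X2 $$ (a,b) - Psi (transpose_mat W * C0' * W2) $$ (a,b))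
     \<le> fip q s (\<lambda>a b. Psi X2 $$ (a,b) - Psi (transpose_mat W * C * W2) $$ (a,b)) (\<lambda>a b. Psi X2 $$ (a,b) - Psi (transpose_mat W * C * W2) $$ (a,b))"
      using transfer[OF Wc W2c X2c] by blast
    define M where "M = transpose_mat W * C0' * W2"
    have Mc: "M \<in> carrier_mat q s" unfolding M_def using Wc C0' W2c by simp
    have PsiW2: "Psi (transpose_mat W * C * W2) = Vq * C * transpose_mat Ush" if C: "C \<in> carrier_mat qh sh" for C
      unfolding PsiW[OF Wc W2c C] LWW unfolding W2_def RW[OF Ushc] ..
    have part2: "fip q s (\<lambda>a b. Psi X2 $$ (a,b) - Psi M $$ (a,b)) (\<lambda>a b. Psi X2 $$ (a,b) - Psi M $$ (a,b))
       \<le> (\<Sum>i\<in>{qh..<q}. (sing_val D4 i)\<^sup>2)"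
    proof -
      define Cw where "Cw = transpose_mat Vq * (transpose_mat LY * C0)"
      have Cwc: "Cw \<in> carrier_mat qh sh" unfolding Cw_def using Vqc LYtc C0 by simp
      have PCw: "Psi (transpose_mat W * Cw * W2) = Vq * (transpose_mat Vq * Psi X2)"
      proof -
        have LC0: "transpose_mat LY * C0 \<in> carrier_mat q sh" using LYtc C0 by simp
        have UshT: "transpose_mat Ush \<in> carrier_mat sh s" using Ushc by simp
        have "Vq * Cw * transpose_mat Ush = Vq * (Cw * transpose_mat Ush)"
          using Vqc Cwc UshT by (intro assoc_mult_mat[of _ q qh _ sh _ s]) auto
        also have "Cw * transpose_mat Ush = transpose_mat Vq * (transpose_mat LY * C0 * transpose_mat Ush)"
          unfolding Cw_def using Vqc LC0 UshT by (intro assoc_mult_mat[of _ qh q _ sh _ s]) auto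
        finally show ?thesis unfolding PsiW2[OF Cwc] PsiX2 .
      qed
      have "fip q s (\<lambda>a b. Psi X2 $$ (a,b) - Psi M $$ (a,b)) (\<lambda>a b. Psi X2 $$ (a,b) - Psi M $$ (a,b))
         \<le> fip q s (\<lambda>a b. Psi X2 $$ (a,b) - (Vq * (transpose_mat Vq * Psi X2)) $$ (a,b)) (\<lambda>a b. Psi X2 $$ (a,b) - (Vq * (transpose_mat Vq * Psi X2)) $$ (a,b))"
        using min4[rule_format, OF Cwc] unfolding PCw M_def .
      also have "\<dots> = (\<Sum>i\<in>{qh..<q}. (sing_val D4 i)\<^sup>2)"
        unfolding Vq_def by (rule svd_left[OF svd4 PX2c qh])
      finally show ?thesis .
    qed
    have "norm_SY T \<Omega> (mtf X - mtf M) = sqrt (fip q s (\<lambda>a b. Psi X $$ (a,b) - Psi M $$ (a,b)) (\<lambda>a b. Psi X $$ (a,b) - Psi M $$ (a,b)))"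
      by (rule norm_mtf[OF Xc Mc])
    also have "\<dots> \<le> sqrt (fip q s (\<lambda>a b. Psi X $$ (a,b) - Psi X2 $$ (a,b)) (\<lambda>a b. Psi X $$ (a,b) - Psi X2 $$ (a,b)))
        + sqrt (fip q s (\<lambda>a b. Psi X2 $$ (a,b) - Psi M $$ (a,b)) (\<lambda>a b. Psi X2 $$ (a,b) - Psi M $$ (a,b)))"
      by (rule fip_tri)
    also have "\<dots> \<le> sqrt (\<Sum>j\<in>{sh-1..<s}. (sing_val D3 j)\<^sup>2) + sqrt (\<Sum>i\<in>{qh..<q}. (sing_val D4 i)\<^sup>2)"
      using part1 part2 by (intro add_mono real_sqrt_le_mono)
    finally show "norm_SY T \<Omega> (mtf X - orth_proj (ip_SY T \<Omega>) (prod_span qh (red_space_basis LY q \<nu> qh U4) sh (red_time_basis LS s \<psi> sh V3)) (mtf X2))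
       \<le> sqrt (\<Sum>j\<in>{sh-1..<s}. (sing_val D3 j)\<^sup>2) + sqrt (\<Sum>i\<in>{qh..<q}. (sing_val D4 i)\<^sup>2)"
      unfolding Z4 Px M_def .
  qed
qed

end

theorem proposition2:
  fixes T :: real and \<Omega> :: "'d::euclidean_space set"
    and \<psi> :: "nat \<Rightarrow> real \<Rightarrow> real" and \<nu> :: "nat \<Rightarrow> 'd \<Rightarrow> real"
    and q s qh sh :: nat and LS LY X :: "real mat"
    and x0 :: "'d \<Rightarrow> real" and x :: "real \<Rightarrow> 'd \<Rightarrow> real"
  assumes T_pos: "T > 0"
    and domain: "open \<Omega>" "connected \<Omega>" "bounded \<Omega>" "\<Omega> \<noteq> {}"
    and psi_L2: "\<forall>j<s. \<psi> j \<in> borel_measurable lborel \<and> set_integrable lborel {0..T} (\<lambda>t. (\<psi> j t)\<^sup>2)"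
    and nu_L2: "\<forall>i<q. \<nu> i \<in> borel_measurable lborel \<and> set_integrable lborel \<Omega> (\<lambda>\<xi>. (\<nu> i \<xi>)\<^sup>2)"
    and nodal: "\<psi> 0 0 = 1" "\<forall>j. 1 \<le> j \<and> j < s \<longrightarrow> \<psi> j 0 = 0"
    and LS: "LS \<in> carrier_mat s s" "upper_triangular LS" "invertible_mat LS"
            "gram_T T s \<psi> = LS * transpose_mat LS"
    and LY: "LY \<in> carrier_mat q q" "invertible_mat LY"
            "gram_Om \<Omega> q \<nu> = LY * transpose_mat LY"
    and x0_L2: "x0 \<in> borel_measurable lborel" "set_integrable lborel \<Omega> (\<lambda>\<xi>. (x0 \<xi>)\<^sup>2)"
    and dims: "1 \<le> qh" "qh \<le> q" "2 \<le> sh" "sh \<le> s"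
    and X: "X \<in> carrier_mat q s" "x = mat_to_fun \<nu> \<psi> X"
    and init: "(\<lambda>\<xi>. x 0 \<xi>) = orth_proj (ip_Om \<Omega>) (fspan q \<nu>) x0"
  shows
    \<comment> \<open>case P = P_{Yhat -> Shat}\<close>
    "(\<forall>U1 D1 V1. is_svd (transpose_mat LY * X * LS) U1 D1 V1 \<longrightarrow>
       (let \<nu>h = red_space_basis LY q \<nu> qh U1;
            x1 = orth_proj (ip_SY T \<Omega>) (prod_span qh \<nu>h s \<psi>) x;
            X1 = coeff_mat q s \<nu> \<psi> x1
        in \<forall>U2 D2 V2. is_svd (transpose_mat LY * zero_first_col X1 * LS) U2 D2 V2 \<longrightarrow>
          (let \<psi>h = red_time_basis LS s \<psi> sh V2;
               Px = orth_proj (ip_SY T \<Omega>) (prod_span qh \<nu>h sh \<psi>h) x1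
           in norm_SY T \<Omega> (x - Px)
                \<le> sqrt (\<Sum>i\<in>{qh..<q}. (sing_val D1 i)\<^sup>2) + sqrt (\<Sum>j\<in>{sh-1..<s}. (sing_val D2 j)\<^sup>2))))
     \<and>
     \<comment> \<open>case P = P_{Shat -> Yhat}\<close>
     (\<forall>U3 D3 V3. is_svd (transpose_mat LY * zero_first_col X * LS) U3 D3 V3 \<longrightarrow>
       (let \<psi>h = red_time_basis LS s \<psi> sh V3;
            x2 = orth_proj (ip_SY T \<Omega>) (prod_span q \<nu> sh \<psi>h) x;
            X2 = coeff_mat q s \<nu> \<psi> x2
        in \<forall>U4 D4 V4. is_svd (transpose_mat LY * X2 * LS) U4 D4 V4 \<longrightarrow>
          (let \<nu>h = red_space_basis LY q \<nu> qh U4;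
               Px = orth_proj (ip_SY T \<Omega>) (prod_span qh \<nu>h sh \<psi>h) x2
           in norm_SY T \<Omega> (x - Px)
                \<le> sqrt (\<Sum>j\<in>{sh-1..<s}. (sing_val D3 j)\<^sup>2) + sqrt (\<Sum>i\<in>{qh..<q}. (sing_val D4 i)\<^sup>2))))"
  proof -
  have Om: "\<Omega> \<in> sets lborel" using borel_open[OF domain(1)] by simp
  interpret setting T \<Omega> \<psi> \<nu> q s LS LY
    using psi_L2 nu_L2 Om LS(1) LS(3) LS(4) LY(1) LY(2) LY(3) by unfold_locales
  show ?thesis unfolding X(2)
    using case1[OF dims(2) dims(3) dims(4) X(1)] case2[OF dims(2) dims(3) dims(4) X(1)] by (rule conjI)
qed

end
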